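(* Let $f(y)=\sum_{k\ge0}\frac{(-y/16)^k}{(k!)^2}$ (so $f(y)=J_0(\tfrac12\sqrt{y})$ for $y\ge0$ and $f(-y^2)=I_0(\tfrac12 y)$). Define, for $(R,u)\in\mathbb{R}^2$ and $s\in\mathbb{R}$, the function $$\chi^\sharp(R,u-s)=\tfrac12\,\mathrm{sgn}(R)\,e^{R/2}f(|u-s|^2-R^2)\mathbf{1}_{|u-s|<|R|}$$ and the measure (for fixed $R$, a measure in $u-s$) $$\chi^\flat(R,u-s)=\tfrac12e^{R/2}(\delta_{u-s=R}+\delta_{u-s=-R})-\tfrac12e^{R/2}\Big(\tfrac12f((u-s)^2-R^2)+2Rf'((u-s)^2-R^2)\Big)\mathbf{1}_{|u-s|<|R|}.$$ Then, in the sense of distributions for $(R,u)\in\mathbb{R}^2$, $\chi^\sharp$ solves $\chi^\sharp_{RR}-\chi^\sharp_{uu}-\chi^\sharp_R=0$ with $\lim_{R\to0}\chi^\sharp(R,\cdot)=0$ and $\lim_{R\to0}\chi^\sharp_R(R,\cdot)=\delta_{u=s}$, and $\chi^\flat$ solves $\chi^\flat_{RR}-\chi^\flat_{uu}-\chi^\flat_R=0$ with $\lim_{R\to0}\chi^\flat(R,\cdot)=\delta_{u=s}$ and $\lim_{R\to0}\chi^\flat_R(R,\cdot)=0$. Moreover $\lim_{R\to-\infty}\chi^\sharp(R,\cdot)=\lim_{R\to-\infty}\chi^\flat(R,\cdot)=0$, and $\chi^\flat(R,u-s)=\chi^\sharp_R(R,u-s)-\chi^\sharp(R,u-s)$.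
   Context: $J_0$ and $I_0$ denote the Bessel and modified Bessel functions of the first kind of order $0$; $\mathbf{1}$ denotes an indicator function. The equation $\eta_{RR}-\eta_{uu}-\eta_R=0$ is the entropy equation $\eta_{\rho\rho}-\rho^{-2}\eta_{uu}=0$ of isothermal gas dynamics ($p(\rho)=\rho$) written in the variable $R=\log\rho$. *)

theory Defs
  imports "HOL-Analysis.Analysis"
begin

definition f_ser :: "real \<Rightarrow> real" where
  "f_ser y = (\<Sum>k. (- y / 16) ^ k / (fact k)^2)"

definition chi_sharp :: "real \<Rightarrow> real \<Rightarrow> real" where
  "chi_sharp R v = (1/2) * sgn R * exp (R/2) * f_ser (v^2 - R^2)
                     * (if \<bar>v\<bar> < \<bar>R\<bar> then 1 else 0)"

definition sharp_pair :: "real \<Rightarrow> real \<Rightarrow> (real \<Rightarrow> real) \<Rightarrow> real" where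
  "sharp_pair s R \<phi> = integral UNIV (\<lambda>u. chi_sharp R (u - s) * \<phi> u)"

text \<open>Pairing of the measure chi-flat(R, . - s) with a function phi of u
  (the absolutely continuous part carries a factor sgn R).\<close>
definition flat_pair :: "real \<Rightarrow> real \<Rightarrow> (real \<Rightarrow> real) \<Rightarrow> real" where
  "flat_pair s R \<phi> =
     (1/2) * exp (R/2) * (\<phi> (s + R) + \<phi> (s - R))
     - (1/2) * sgn R * exp (R/2) *
       integral UNIV (\<lambda>u. (if \<bar>u - s\<bar> < \<bar>R\<bar>
            then ((1/2) * f_ser ((u - s)^2 - R^2) + 2 * R * deriv f_ser ((u - s)^2 - R^2)) * \<phi> u
            else 0))"

definition test1 :: "(real \<Rightarrow> real) \<Rightarrow> bool" where
  "test1 \<phi> \<longleftrightarrow> (\<forall>n x. ((deriv ^^ n) \<phi>) differentiable (at x))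
                 \<and> (\<exists>K. \<forall>x. K < \<bar>x\<bar> \<longrightarrow> \<phi> x = 0)"

definition pR :: "(real \<Rightarrow> real \<Rightarrow> real) \<Rightarrow> real \<Rightarrow> real \<Rightarrow> real" where
  "pR g = (\<lambda>R u. deriv (\<lambda>r. g r u) R)"

definition pu :: "(real \<Rightarrow> real \<Rightarrow> real) \<Rightarrow> real \<Rightarrow> real \<Rightarrow> real" where
  "pu g = (\<lambda>R u. deriv (\<lambda>v. g R v) u)"

inductive_set partials :: "(real \<Rightarrow> real \<Rightarrow> real) \<Rightarrow> (real \<Rightarrow> real \<Rightarrow> real) set"
  for \<psi> where
  base: "\<psi> \<in> partials \<psi>"
| dR: "g \<in> partials \<psi> \<Longrightarrow> pR g \<in> partials \<psi>"
| du: "g \<in> partials \<psi> \<Longrightarrow> pu g \<in> partials \<psi>"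

definition test2 :: "(real \<Rightarrow> real \<Rightarrow> real) \<Rightarrow> bool" where
  "test2 \<psi> \<longleftrightarrow>
     (\<forall>g \<in> partials \<psi>. continuous_on UNIV (\<lambda>(R, u). g R u)
        \<and> (\<forall>R u. (\<lambda>r. g r u) differentiable (at R) \<and> (\<lambda>v. g R v) differentiable (at u)))
     \<and> (\<exists>K. \<forall>R u. K < \<bar>R\<bar> \<or> K < \<bar>u\<bar> \<longrightarrow> \<psi> R u = 0)"

text \<open>Formal adjoint of L = d_RR - d_uu - d_R.\<close>
definition Lstar :: "(real \<Rightarrow> real \<Rightarrow> real) \<Rightarrow> real \<Rightarrow> real \<Rightarrow> real" where
  "Lstar \<psi> = (\<lambda>R u. pR (pR \<psi>) R u - pu (pu \<psi>) R u + pR \<psi> R u)"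

end

theory Submission
  imports Defs
begin

definition cf :: "nat \<Rightarrow> real" where "cf k = (-1/16)^k / (fact k)^2"

lemma f_ser_eq: "f_ser y = (\<Sum>k. cf k * y^k)"
proof -
  have "(- y / 16) ^ k / (fact k)^2 = cf k * y^k" for k
  proof -
    have "- y / 16 = (-1/16) * y" by simp
    then have "(- y / 16) ^ k = (-1/16)^k * y^k" by (simp only: power_mult_distrib)
    then show ?thesis by (simp add: cf_def)
  qed
  then show ?thesis unfolding f_ser_def by simp
qed

lemma cf_abs: "\<bar>cf n\<bar> \<le> inverse (fact n)"
proof -
  have a: "(1/16::real)^n \<le> 1" by (simp add: power_le_one)
  have f1: "(1::real) \<le> fact n" by simp
  have b: "fact n \<le> (fact n::real)^2" unfolding power2_eq_square using f1 by simp
  have "\<bar>cf n\<bar> = (1/16)^n / (fact n)^2" by (simp add: cf_def power_abs)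
  also have "\<dots> \<le> 1 / (fact n)^2"
    using a by (intro divide_right_mono) auto
  also have "\<dots> \<le> 1 / fact n" using b f1 by (intro divide_left_mono) auto
  finally show ?thesis by (simp add: divide_inverse)
qed

lemma cf_summable: "summable (\<lambda>k. cf k * y^k)"
proof (rule summable_comparison_test[OF _ summable_exp[of "norm y"]])
  show "\<exists>N. \<forall>n\<ge>N. norm (cf n * y ^ n) \<le> inverse (fact n) * norm y ^ n"
    using cf_abs by (auto simp: abs_mult power_abs intro!: mult_right_mono)
qed

definition f1 :: "real \<Rightarrow> real" where "f1 y = (\<Sum>k. diffs cf k * y^k)"
definition f2 :: "real \<Rightarrow> real" where "f2 y = (\<Sum>k. diffs (diffs cf) k * y^k)"
definition f3 :: "real \<Rightarrow> real" where "f3 y = (\<Sum>k. diffs (diffs (diffs cf)) k * y^k)"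

lemma cf_summable1: "summable (\<lambda>k. diffs cf k * y^k)"
  by (rule termdiff_converges_all) (rule cf_summable)
lemma cf_summable2: "summable (\<lambda>k. diffs (diffs cf) k * y^k)"
  by (rule termdiff_converges_all) (rule cf_summable1)
lemma cf_summable3: "summable (\<lambda>k. diffs (diffs (diffs cf)) k * y^k)"
  by (rule termdiff_converges_all) (rule cf_summable2)

lemma f0_deriv: "(f_ser has_real_derivative f1 y) (at y)"
  unfolding f1_def using termdiffs_strong_converges_everywhere[OF cf_summable]
  by (simp add: f_ser_eq[abs_def])
lemma f1_deriv: "(f1 has_real_derivative f2 y) (at y)"
  unfolding f1_def f2_def using termdiffs_strong_converges_everywhere[OF cf_summable1] by simp
lemma f2_deriv: "(f2 has_real_derivative f3 y) (at y)"
  unfolding f2_def f3_def using termdiffs_strong_converges_everywhere[OF cf_summable2] by simp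

lemma deriv_f_ser: "deriv f_ser = f1"
  using f0_deriv DERIV_imp_deriv by blast

lemma cont_f0: "continuous_on S f_ser"
  by (intro continuous_at_imp_continuous_on ballI DERIV_isCont[OF f0_deriv])
lemma cont_f1: "continuous_on S f1"
  by (intro continuous_at_imp_continuous_on ballI DERIV_isCont[OF f1_deriv])
lemma cont_f2: "continuous_on S f2"
  by (intro continuous_at_imp_continuous_on ballI DERIV_isCont[OF f2_deriv])

lemma cont_f0' [continuous_intros]: "continuous_on S h \<Longrightarrow> continuous_on S (\<lambda>x. f_ser (h x))"
  using continuous_on_compose2[OF cont_f0[of UNIV]] by blast
lemma cont_f1' [continuous_intros]: "continuous_on S h \<Longrightarrow> continuous_on S (\<lambda>x. f1 (h x))"
  using continuous_on_compose2[OF cont_f1[of UNIV]] by blast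
lemma cont_f2' [continuous_intros]: "continuous_on S h \<Longrightarrow> continuous_on S (\<lambda>x. f2 (h x))"
  using continuous_on_compose2[OF cont_f2[of UNIV]] by blast

lemma f0_at0: "f_ser 0 = 1"
  unfolding f_ser_eq powser_zero by (simp add: cf_def)

lemma f1_at0: "f1 0 = -1/16"
  unfolding f1_def powser_zero by (simp add: cf_def diffs_def)

lemma cf_Suc: "cf (Suc n) = - cf n / (16 * (real (Suc n))^2)"
proof -
  have "fact (Suc n) = real (Suc n) * fact n" by simp
  then show ?thesis unfolding cf_def by (simp add: power_mult_distrib)
qed

lemma diffs_apply: "diffs c n = of_nat (Suc n) * c (Suc n)"
  by (simp add: diffs_def)

lemma f_ode: "q * f2 q + f1 q + f_ser q / 16 = 0"
proof -
  define h where "h n = real n * diffs cf n * q^n" for n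
  have s2: "(\<lambda>n. diffs (diffs cf) n * q^n) sums f2 q"
    using cf_summable2 f2_def summable_sums by metis
  have eqh: "q * (diffs (diffs cf) n * q^n) = h (Suc n)" for n
    unfolding h_def diffs_apply[of "diffs cf"] by (simp add: algebra_simps)
  have "(\<lambda>n. h (Suc n)) sums (q * f2 q)"
    using sums_mult[OF s2, of q] unfolding eqh .
  then have hs: "h sums (q * f2 q)"
    using sums_Suc_iff[of h "q * f2 q"] by (simp add: h_def)
  have s1: "(\<lambda>n. diffs cf n * q^n) sums f1 q"
    using cf_summable1 f1_def summable_sums by metis
  have s0: "(\<lambda>n. cf n * q^n / 16) sums (f_ser q / 16)"
    using sums_divide[OF summable_sums[OF cf_summable[of q]], of 16] by (simp add: f_ser_eq)
  have "(\<lambda>n. h n + diffs cf n * q^n + cf n * q^n / 16) sums (q * f2 q + f1 q + f_ser q / 16)"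
    by (intro sums_add hs s1 s0)
  moreover have "(\<lambda>n. h n + diffs cf n * q^n + cf n * q^n / 16) = (\<lambda>n. 0)"
  proof
    fix n
    have "h n + diffs cf n * q^n + cf n * q^n / 16 = q^n * ((real n + 1) * diffs cf n + cf n / 16)"
      by (simp add: h_def algebra_simps)
    also have "(real n + 1) * diffs cf n = - cf n / 16"
    proof -
      have "(real n + 1) * diffs cf n = (real (Suc n))^2 * cf (Suc n)"
        unfolding diffs_apply by (simp add: power2_eq_square)
      also have "\<dots> = - cf n / 16" unfolding cf_Suc by (simp add: field_simps)
      finally show ?thesis .
    qed
    finally show "h n + diffs cf n * q^n + cf n * q^n / 16 = 0" by simp
  qed
  ultimately show ?thesis using sums_unique2 sums_zero by metis
qed

lemma f_ser_sums: "(\<lambda>k. (- y / 16) ^ k / (fact k)^2) sums f_ser y"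
proof -
  have e: "(- y / 16) ^ k / (fact k)^2 = cf k * y^k" for k
  proof -
    have "- y / 16 = (-1/16) * y" by simp
    then have "(- y / 16) ^ k = (-1/16)^k * y^k" by (simp only: power_mult_distrib)
    then show ?thesis by (simp add: cf_def)
  qed
  have "summable (\<lambda>k. (- y / 16) ^ k / (fact k)^2)"
    unfolding e by (rule cf_summable)
  then show ?thesis unfolding f_ser_def by (simp add: summable_sums)
qed

lemma f1_term: "diffs cf k * y^k = - ((real k + 1) * (- y / 16) ^ k / (16 * (fact (Suc k))^2))"
proof -
  have "(- y / 16) ^ k = (-1/16)^k * y^k"
    by (metis (no_types, opaque_lifting) mult_minus1 power_mult_distrib times_divide_eq_left times_divide_eq_right)
  then show ?thesis unfolding diffs_apply cf_def by (simp add: field_simps)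
qed

lemma f1_sums: "(\<lambda>k. (real k + 1) * (- y / 16) ^ k / (16 * (fact (Suc k))^2)) sums (- f1 y)"
proof -
  have "(\<lambda>k. diffs cf k * y^k) sums f1 y" using cf_summable1 f1_def summable_sums by metis
  then have "(\<lambda>k. - (diffs cf k * y^k)) sums (- f1 y)" by (rule sums_minus)
  then show ?thesis unfolding f1_term by simp
qed

lemma f0_mono:
  assumes "y' \<le> y" "y \<le> (0::real)"
  shows "0 \<le> f_ser y" "f_ser y \<le> f_ser y'"
proof -
  have t0: "0 \<le> (- y / 16) ^ k / (fact k)^2" for k using assms by simp
  show "0 \<le> f_ser y" using sums_le[of "\<lambda>k. 0", OF _ sums_zero f_ser_sums] t0 by auto
  have "(- y / 16) ^ k / (fact k)^2 \<le> (- y' / 16) ^ k / (fact k)^2" for k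
    using assms by (intro divide_right_mono power_mono) auto
  then show "f_ser y \<le> f_ser y'" using sums_le[OF _ f_ser_sums f_ser_sums] by blast
qed

lemma f1_mono:
  assumes "y' \<le> y" "y \<le> (0::real)"
  shows "\<bar>f1 y\<bar> \<le> \<bar>f1 y'\<bar>"
proof -
  have t0: "0 \<le> (real k + 1) * (- y / 16) ^ k / (16 * (fact (Suc k))^2)" if "y \<le> 0" for k :: nat and y :: real
    using that by (intro divide_nonneg_nonneg mult_nonneg_nonneg zero_le_power) auto
  have "0 \<le> - f1 y" using sums_le[of "\<lambda>k. 0", OF _ sums_zero f1_sums] assms t0 by auto
  moreover have "0 \<le> - f1 y'" using sums_le[of "\<lambda>k. 0", OF _ sums_zero f1_sums] assms t0 by auto
  moreover have "(real k + 1) * (- y / 16) ^ k / (16 * (fact (Suc k))^2) \<le> (real k + 1) * (- y' / 16) ^ k / (16 * (fact (Suc k))^2)" for k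
    using assms by (intro divide_right_mono mult_left_mono power_mono) auto
  then have "- f1 y \<le> - f1 y'" using sums_le[OF _ f1_sums f1_sums] by blast
  ultimately show ?thesis by linarith
qed

lemma sum_powfact_le_exp:
  fixes m :: "nat \<Rightarrow> nat" and t :: real
  assumes "inj m" "0 \<le> t"
  shows "(\<Sum>k<n. t^(m k) / fact (m k)) \<le> exp t"
proof -
  have "(\<Sum>k<n. t^(m k) / fact (m k)) = (\<Sum>j\<in>m ` {..<n}. t^j / fact j)"
    using assms(1) by (subst sum.reindex) (auto intro: inj_on_subset)
  also have "\<dots> \<le> (\<Sum>j. t^j / fact j)"
  proof (rule sum_le_suminf)
    show "summable (\<lambda>j. t ^ j / fact j)"
      using summable_exp[of t] by (simp add: divide_inverse mult.commute)
  qed (use assms in auto)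
  also have "\<dots> = exp t" by (simp add: exp_def divide_inverse mult.commute scaleR_conv_of_real)
  finally show ?thesis .
qed

lemma exp_series_lim:
  fixes a :: "nat \<Rightarrow> real \<Rightarrow> real" and b :: "nat \<Rightarrow> real" and m :: "nat \<Rightarrow> nat"
  assumes m: "inj m" and b0: "b \<longlonglongrightarrow> 0" and bpos: "\<And>k. 0 \<le> b k"
    and aeq: "\<And>k t. 0 \<le> t \<Longrightarrow> a k t = b k * (t^(m k) / fact (m k))"
    and S: "\<And>t. 0 \<le> t \<Longrightarrow> (\<lambda>k. a k t) sums S t"
  shows "((\<lambda>t. exp (-t) * S t) \<longlongrightarrow> 0) at_top"
proof (rule tendstoI)
  fix e :: real assume e: "e > 0"
  from b0 have "\<forall>\<^sub>F k in sequentially. dist (b k) 0 < e/2" using e by (intro tendstoD) auto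
  then obtain N where N: "\<And>k. k \<ge> N \<Longrightarrow> b k < e/2"
    unfolding eventually_sequentially dist_real_def using bpos by (metis abs_of_nonneg diff_zero)
  define Q where "Q t = (\<Sum>k<N. b k * (t^(m k) / fact (m k)))" for t :: real
  have Sle: "S t \<le> Q t + e/2 * exp t" if t: "0 \<le> t" for t
  proof -
    have "summable (\<lambda>k. a k t)" using S[OF t] sums_summable by blast
    moreover have "sum (\<lambda>k. a k t) {..<n} \<le> Q t + e/2 * exp t" for n
    proof -
      define x where "x k = t^(m k) / fact (m k)" for k
      have x0: "0 \<le> x k" for k using t by (simp add: x_def)
      have "b k * x k \<le> (if k \<in> {..<N} then b k * x k else 0) + e/2 * x k" for k
      proof (cases "k < N")
        case True then show ?thesis using x0[of k] e by simp
      next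
        case False
        then have "b k * x k \<le> e/2 * x k" using N[of k] x0[of k] by (intro mult_right_mono) auto
        then show ?thesis using False by simp
      qed
      then have "sum (\<lambda>k. a k t) {..<n} \<le> (\<Sum>k<n. (if k \<in> {..<N} then b k * x k else 0) + e/2 * x k)"
        using aeq[OF t] by (intro sum_mono) (simp add: x_def)
      also have "\<dots> = (\<Sum>k\<in>{..<n} \<inter> {..<N}. b k * x k) + e/2 * (\<Sum>k<n. x k)"
        by (simp add: sum.distrib sum_distrib_left sum.inter_restrict)
      also have "(\<Sum>k\<in>{..<n} \<inter> {..<N}. b k * x k) \<le> Q t"
        unfolding Q_def x_def[symmetric] using bpos x0 by (intro sum_mono2) (auto intro: mult_nonneg_nonneg)
      also have "(\<Sum>k<n. x k) \<le> exp t" unfolding x_def using sum_powfact_le_exp[OF m t] .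
      finally show ?thesis using e by (simp add: mult_left_mono)
    qed
    ultimately have "(\<Sum>k. a k t) \<le> Q t + e/2 * exp t" by (rule suminf_le_const)
    then show ?thesis using sums_unique[OF S[OF t]] by simp
  qed
  have S0: "0 \<le> S t" if t: "0 \<le> t" for t
    using sums_le[of "\<lambda>k. 0", OF _ sums_zero S[OF t]] aeq[OF t] bpos t by (auto intro: mult_nonneg_nonneg)
  have "((\<lambda>t. exp (-t) * Q t) \<longlongrightarrow> 0) at_top"
  proof -
    have "((\<lambda>t. \<Sum>k<N. b k / fact (m k) * (t^(m k) / exp t)) \<longlongrightarrow> (\<Sum>k<N. b k / fact (m k) * 0)) at_top"
      by (intro tendsto_sum tendsto_mult tendsto_const tendsto_power_div_exp_0)
    moreover have "(\<Sum>k<N. b k / fact (m k) * (t^(m k) / exp t)) = exp (-t) * Q t" for t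
      by (simp add: Q_def sum_distrib_left exp_minus field_simps)
    ultimately show ?thesis by simp
  qed
  then have "\<forall>\<^sub>F t in at_top. dist (exp (-t) * Q t) 0 < e/2" using e by (intro tendstoD) auto
  moreover have "\<forall>\<^sub>F t in at_top. (0::real) \<le> t" by (rule eventually_ge_at_top)
  ultimately show "\<forall>\<^sub>F t in at_top. dist (exp (-t) * S t) 0 < e"
  proof eventually_elim
    case (elim t)
    have "exp (-t) * S t \<le> exp (-t) * (Q t + e/2 * exp t)"
      using Sle[OF elim(2)] by (intro mult_left_mono) auto
    also have "\<dots> = exp (-t) * Q t + e/2" by (simp add: algebra_simps exp_minus)
    finally have "exp (-t) * S t \<le> exp (-t) * Q t + e/2" .
    moreover have "0 \<le> exp (-t) * S t" using S0[OF elim(2)] by simp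
    ultimately show ?case using elim(1) by (simp add: dist_real_def)
  qed
qed

fun cc :: "nat \<Rightarrow> real" where
  "cc 0 = 1"
| "cc (Suc k) = cc k * (2*k+1) / (2*k+2)"

lemma cc_closed: "cc k * 4^k * (fact k)^2 = fact (2*k)"
proof (induction k)
  case 0 then show ?case by simp
next
  case (Suc k)
  have f2: "fact (2 * Suc k) = (real (2*k+2) * real (2*k+1)) * (fact (2*k) :: real)"
    by (simp add: algebra_simps)
  have f1: "fact (Suc k) = real (k+1) * (fact k :: real)" by simp
  have "cc (Suc k) * 4^(Suc k) * (fact (Suc k))^2
      = (cc k * 4^k * (fact k)^2) * ((2*k+1) / (2*k+2) * 4 * (real k+1)^2)"
    unfolding f1 cc.simps by (simp add: power_mult_distrib power2_eq_square algebra_simps)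
  also have "(2*k+1) / (2*k+2) * 4 * (real k+1)^2 = real (2*k+2) * real (2*k+1)"
    by (simp add: field_simps power2_eq_square)
  finally show ?case unfolding f2 Suc by simp
qed

lemma cc_pos: "0 \<le> cc k" by (induction k) auto

lemma cc_sq: "(cc k)^2 \<le> 1 / (real k + 1)"
proof (induction k)
  case 0 then show ?case by simp
next
  case (Suc k)
  have "(cc (Suc k))^2 = (cc k)^2 * ((2*k+1)^2 / (2*k+2)^2)"
    by (simp add: power_mult_distrib power_divide)
  also have "\<dots> \<le> 1 / (real k + 1) * ((2*k+1)^2 / (2*k+2)^2)"
    using Suc by (intro mult_right_mono) auto
  also have "\<dots> \<le> 1 / (real (Suc k) + 1)"
  proof -
    define a :: real where "a = (2*k+1)^2"
    define D :: real where "D = (real k + 1) * (2*k+2)^2"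
    have D0: "0 < D" by (simp add: D_def)
    have eq: "1 / (real k + 1) * ((2*k+1)^2 / (2*k+2)^2) = a / D" by (simp add: a_def D_def)
    have "a * (real k + 2) \<le> D" by (simp add: a_def D_def power2_eq_square algebra_simps)
    then have "a \<le> D / (real k + 2)" by (simp add: pos_le_divide_eq)
    then have X: "a / D \<le> 1 / (real k + 2)" using D0 by (intro mult_imp_div_pos_le) auto
    have rk: "real (Suc k) + 1 = real k + 2" by simp
    show ?thesis unfolding eq rk by (fact X)
  qed
  finally show ?case .
qed

lemma cc_lim: "cc \<longlonglongrightarrow> 0"
proof (rule tendsto_sandwich[of "\<lambda>_. 0" _ _ "\<lambda>k. sqrt (inverse (real (Suc k)))"])
  show "\<forall>\<^sub>F n in sequentially. 0 \<le> cc n" by (simp add: cc_pos)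
  show "\<forall>\<^sub>F n in sequentially. cc n \<le> sqrt (inverse (real (Suc n)))"
  proof (intro always_eventually allI)
    fix n
    show "cc n \<le> sqrt (inverse (real (Suc n)))" using cc_sq[of n]
      by (intro real_le_rsqrt) (simp add: divide_inverse add.commute)
  qed
  show "(\<lambda>k. sqrt (inverse (real (Suc k)))) \<longlonglongrightarrow> 0"
    using tendsto_real_sqrt[OF LIMSEQ_inverse_real_of_nat] by simp
qed simp

lemma cc_alt: "cc k = fact (2*k) / (4^k * (fact k)^2)"
  using cc_closed[of k] by (simp add: field_simps)

lemma lim_f0: "((\<lambda>T. exp (-T) * f_ser (-4*T^2)) \<longlongrightarrow> 0) at_top"
proof (rule exp_series_lim[where a = "\<lambda>k T. (- (-4*T^2) / 16) ^ k / (fact k)^2" and b = cc and m = "\<lambda>k. 2*k"])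
  show "inj (\<lambda>k::nat. 2*k)" by (auto simp: inj_def)
  show "cc \<longlonglongrightarrow> 0" by (rule cc_lim)
  show "0 \<le> cc k" for k by (rule cc_pos)
  show "(\<lambda>k. (- (-4*T^2) / 16) ^ k / (fact k)^2) sums f_ser (-4*T^2)" for T by (rule f_ser_sums)
  fix k :: nat and T :: real
  have "(- (-4*T^2) / 16) ^ k = T^(2*k) / 4^k"
    by (simp add: power_divide power_mult[symmetric] power2_eq_square[symmetric])
  then show "(- (-4*T^2) / 16) ^ k / (fact k)^2 = cc k * (T^(2*k) / fact (2*k))"
    unfolding cc_alt by (simp add: field_simps)
qed

lemma aux_alg1:
  fixes F G P n x :: real
  assumes "F \<noteq> 0" "G \<noteq> 0" "P \<noteq> 0" "2*n+2 \<noteq> 0" "2*n+1 \<noteq> 0" "n+1 \<noteq> 0"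
  shows "(F/(P*G^2) * (2*n+1)/(2*n+2))/8 * (x/((2*n+1)*F)) = x/(16*(n+1)*P*G^2)"
proof -
  have "(F/(P*G^2) * (2*n+1)/(2*n+2))/8 * (x/((2*n+1)*F)) = (x * ((2*n+1)*F)) / ((P*G^2*(2*n+2)*8) * ((2*n+1)*F))"
    by (simp add: field_simps)
  also have "\<dots> = x / (P*G^2*(2*n+2)*8)" using assms by simp
  also have "P*G^2*(2*n+2)*8 = 16*(n+1)*P*G^2" by (simp add: algebra_simps)
  finally show ?thesis .
qed

lemma aux_alg2:
  fixes G P n y T :: real
  assumes "G \<noteq> 0" "P \<noteq> 0" "n+1 \<noteq> 0"
  shows "(T*y)/(16*(n+1)*P*G^2) = T*((n+1)*(y/P)/(16*((n+1)*G)^2))"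
proof -
  have "T*((n+1)*(y/P)/(16*((n+1)*G)^2)) = ((T*y) * (n+1)) / ((16*(n+1)*P*G^2) * (n+1))"
    by (simp add: field_simps power2_eq_square)
  also have "\<dots> = (T*y)/(16*(n+1)*P*G^2)" using assms by simp
  finally show ?thesis ..
qed

lemma lim_f1: "((\<lambda>T. exp (-T) * (T * \<bar>f1 (-4*T^2)\<bar>)) \<longlongrightarrow> 0) at_top"
proof -
  have "((\<lambda>T. exp (-T) * (T * (- f1 (-4*T^2)))) \<longlongrightarrow> 0) at_top"
  proof (rule exp_series_lim[where a = "\<lambda>k T. T * ((real k + 1) * (- (-4*T^2) / 16) ^ k / (16 * (fact (Suc k))^2))"
      and b = "\<lambda>k. cc (Suc k) / 8" and m = "\<lambda>k. 2*k+1"])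
    show "inj (\<lambda>k::nat. 2*k+1)" by (auto simp: inj_def)
    show "(\<lambda>k. cc (Suc k) / 8) \<longlonglongrightarrow> 0"
      using tendsto_divide[OF LIMSEQ_Suc[OF cc_lim] tendsto_const[of 8]] by simp
    show "0 \<le> cc (Suc k) / 8" for k using cc_pos[of "Suc k"] by (simp del: cc.simps)
    show "(\<lambda>k. T * ((real k + 1) * (- (-4*T^2) / 16) ^ k / (16 * (fact (Suc k))^2))) sums (T * (- f1 (-4*T^2)))" for T
      by (rule sums_mult[OF f1_sums])
    fix k :: nat and T :: real
    have p: "(- (-4*T^2) / 16) ^ k = T^(2*k) / 4^k"
      by (simp add: power_divide power_mult[symmetric] power2_eq_square[symmetric])
    have fs: "fact (2*k+1) = (2 * real k + 1) * (fact (2*k) :: real)" by simp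
    have r1: "real (2*k+1) = 2 * real k + 1" and r2: "real (2*k+2) = 2 * real k + 2" by simp_all
    have fk: "fact (Suc k) = (real k + 1) * (fact k :: real)" by simp
    have pw: "T^(2*k+1) = T * T^(2*k)" by simp
    have "cc (Suc k) / 8 * (T^(2*k+1) / fact (2*k+1)) = T^(2*k+1) / (16 * (real k + 1) * 4^k * (fact k)^2)"
      unfolding cc.simps cc_alt[of k] fs r1 r2 by (rule aux_alg1) auto
    also have "\<dots> = T * ((real k + 1) * (- (-4*T^2) / 16) ^ k / (16 * (fact (Suc k))^2))"
      unfolding p fk pw by (rule aux_alg2) auto
    finally show "T * ((real k + 1) * (- (-4*T^2) / 16) ^ k / (16 * (fact (Suc k))^2)) = cc (Suc k) / 8 * (T^(2*k+1) / fact (2*k+1))" ..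
  qed
  moreover have "f1 (-4*T^2) \<le> 0" for T
  proof -
    have "0 \<le> - f1 (-4*T^2)"
      using sums_le[of "\<lambda>k. 0", OF _ sums_zero f1_sums[of "-4*T^2"]]
      by (auto intro!: divide_nonneg_nonneg mult_nonneg_nonneg zero_le_power)
    then show ?thesis by simp
  qed
  ultimately show ?thesis by simp
qed

lemma sub_int:
  fixes h :: "real \<Rightarrow> real"
  assumes h: "continuous_on UNIV h" and R: "R \<noteq> 0"
  shows "((\<lambda>u. if \<bar>u - s\<bar> < \<bar>R\<bar> then h u else 0) has_integral (\<bar>R\<bar> * integral {-1..1} (\<lambda>t. h (s + R*t)))) UNIV"
proof -
  define a where "a = s - \<bar>R\<bar>"
  define b where "b = s + \<bar>R\<bar>"
  have ab: "a \<le> b" using R by (simp add: a_def b_def)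
  have hc: "continuous_on {a..b} h" using h continuous_on_subset by blast
  have sub: "((\<lambda>t. \<bar>R\<bar> *\<^sub>R h (s + \<bar>R\<bar>*t)) has_integral integral {s + \<bar>R\<bar>*(-1)..s + \<bar>R\<bar>*1} h) {-1..1}"
  proof (rule has_integral_substitution[where c = a and d = b])
    show "(\<lambda>t. s + \<bar>R\<bar> * t) ` {-1..1} \<subseteq> {a..b}"
    proof
      fix x assume "x \<in> (\<lambda>t. s + \<bar>R\<bar> * t) ` {-1..1}"
      then obtain t where t: "-1 \<le> t" "t \<le> 1" and x: "x = s + \<bar>R\<bar> * t" by auto
      have "\<bar>R\<bar> * t \<le> \<bar>R\<bar> * 1" using t by (intro mult_left_mono) auto
      moreover have "\<bar>R\<bar> * (-1) \<le> \<bar>R\<bar> * t" using t by (intro mult_left_mono) auto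
      ultimately show "x \<in> {a..b}" by (simp add: x a_def b_def)
    qed
    show "\<And>x. x \<in> {-1..1} \<Longrightarrow> ((\<lambda>t. s + \<bar>R\<bar> * t) has_real_derivative \<bar>R\<bar>) (at x within {-1..1})"
      by (auto intro!: derivative_eq_intros)
  qed (use hc R in auto)
  have e1: "integral {s + \<bar>R\<bar>*(-1)..s + \<bar>R\<bar>*1} h = integral {a..b} h" by (simp add: a_def b_def)
  have e2: "integral {-1..1} (\<lambda>t. h (s + \<bar>R\<bar>*t)) = integral {-1..1} (\<lambda>t. h (s + R*t))"
  proof (cases "R > 0")
    case True then show ?thesis by simp
  next
    case False
    then have "\<bar>R\<bar> = -R" by simp
    then have "integral {-1..1} (\<lambda>t. h (s + \<bar>R\<bar>*t)) = integral {- 1..- (-1)} (\<lambda>t. (\<lambda>t. h (s + R*t)) (-t))"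
      by simp
    also have "\<dots> = integral {-1..1} (\<lambda>t. h (s + R*t))" by (rule Henstock_Kurzweil_Integration.integral_reflect_real[of 1 "-1" "\<lambda>t. h (s + R*t)"])
    finally show ?thesis .
  qed
  have I: "(h has_integral \<bar>R\<bar> * integral {-1..1} (\<lambda>t. h (s + R*t))) {a..b}"
  proof -
    have "(h has_integral integral {a..b} h) {a..b}"
      using hc by (intro integrable_integral integrable_continuous_interval)
    moreover have "integral {a..b} h = \<bar>R\<bar> * integral {-1..1} (\<lambda>t. h (s + R*t))"
    proof -
      have "integral {a..b} h = integral {-1..1} (\<lambda>t. \<bar>R\<bar> * h (s + \<bar>R\<bar>*t))"
        using integral_unique[OF sub] e1 by simp
      also have "\<dots> = \<bar>R\<bar> * integral {-1..1} (\<lambda>t. h (s + \<bar>R\<bar>*t))" by simp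
      finally show ?thesis using e2 by simp
    qed
    ultimately show ?thesis by simp
  qed
  then have HI: "((\<lambda>u. if u \<in> {a..b} then h u else 0) has_integral \<bar>R\<bar> * integral {-1..1} (\<lambda>t. h (s + R*t))) UNIV"
    by (simp only: has_integral_restrict_UNIV)
  show ?thesis
    by (rule has_integral_spike_finite[where S = "{a,b}", OF _ _ HI]) (auto simp: a_def b_def abs_less_iff)
qed

definition Ag :: "real \<Rightarrow> (real \<Rightarrow> real \<Rightarrow> real) \<Rightarrow> real \<Rightarrow> real" where
  "Ag s g R = R/2 * exp (R/2) * integral {-1..1} (\<lambda>t. f_ser (R^2*(t^2-1)) * g R (s+R*t))"

definition Bg :: "real \<Rightarrow> (real \<Rightarrow> real \<Rightarrow> real) \<Rightarrow> real \<Rightarrow> real" where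
  "Bg s g R = exp (R/2)/2 * (g R (s+R) + g R (s-R))
     - R/2 * exp (R/2) * integral {-1..1} (\<lambda>t. (f_ser (R^2*(t^2-1))/2 + 2*R*f1 (R^2*(t^2-1))) * g R (s+R*t))"

lemma sq_sub: "(s + R*t - s)^2 - R^2 = R^2*(t^2-1)" for s R t :: real
  by (simp add: algebra_simps power2_eq_square)

lemma sharp_t:
  assumes phi: "continuous_on UNIV \<phi>"
  shows "sharp_pair s R \<phi> = Ag s (\<lambda>_. \<phi>) R"
proof (cases "R = 0")
  case True then show ?thesis by (simp add: sharp_pair_def chi_sharp_def Ag_def)
next
  case R: False
  define c where "c = 1/2 * sgn R * exp (R/2)"
  define h where "h u = c * (f_ser ((u-s)^2 - R^2) * \<phi> u)" for u
  have hc: "continuous_on UNIV h" unfolding h_def by (intro continuous_intros phi)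
  have eq: "(\<lambda>u. chi_sharp R (u - s) * \<phi> u) = (\<lambda>u. if \<bar>u - s\<bar> < \<bar>R\<bar> then h u else 0)"
    by (auto simp: chi_sharp_def h_def c_def fun_eq_iff)
  have "sharp_pair s R \<phi> = \<bar>R\<bar> * integral {-1..1} (\<lambda>t. h (s + R*t))"
    unfolding sharp_pair_def eq using sub_int[OF hc R] integral_unique by blast
  also have "integral {-1..1} (\<lambda>t. h (s + R*t)) = c * integral {-1..1} (\<lambda>t. f_ser (R^2*(t^2-1)) * \<phi> (s+R*t))"
    unfolding h_def sq_sub by simp
  also have "\<bar>R\<bar> * (c * integral {-1..1} (\<lambda>t. f_ser (R^2*(t^2-1)) * \<phi> (s+R*t))) = Ag s (\<lambda>_. \<phi>) R"
  proof -
    have "\<bar>R\<bar> * c = R/2 * exp (R/2)" unfolding c_def using abs_mult_sgn[of R] by (simp add: algebra_simps)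
    then show ?thesis unfolding Ag_def by (simp add: mult.assoc[symmetric])
  qed
  finally show ?thesis .
qed

lemma flat_t:
  assumes phi: "continuous_on UNIV \<phi>"
  shows "flat_pair s R \<phi> = Bg s (\<lambda>_. \<phi>) R"
proof (cases "R = 0")
  case True then show ?thesis by (simp add: flat_pair_def Bg_def)
next
  case R: False
  define h where "h u = (f_ser ((u-s)^2 - R^2) / 2 + 2 * R * f1 ((u-s)^2 - R^2)) * \<phi> u" for u
  have hc: "continuous_on UNIV h" unfolding h_def by (intro continuous_intros phi) auto
  have eq: "(\<lambda>u. if \<bar>u - s\<bar> < \<bar>R\<bar>
            then ((1/2) * f_ser ((u - s)^2 - R^2) + 2 * R * deriv f_ser ((u - s)^2 - R^2)) * \<phi> u
            else 0) = (\<lambda>u. if \<bar>u - s\<bar> < \<bar>R\<bar> then h u else 0)"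
    by (auto simp: h_def deriv_f_ser fun_eq_iff)
  have I: "integral UNIV (\<lambda>u. if \<bar>u - s\<bar> < \<bar>R\<bar> then h u else 0) = \<bar>R\<bar> * integral {-1..1} (\<lambda>t. h (s + R*t))"
    using sub_int[OF hc R] integral_unique by blast
  have I2: "integral {-1..1} (\<lambda>t. h (s + R*t)) = integral {-1..1} (\<lambda>t. (f_ser (R^2*(t^2-1))/2 + 2*R*f1 (R^2*(t^2-1))) * \<phi> (s+R*t))"
    unfolding h_def sq_sub by simp
  have sg: "sgn R * \<bar>R\<bar> = R" using abs_mult_sgn[of R] by (simp add: mult.commute)
  show ?thesis unfolding flat_pair_def eq I I2 Bg_def
    by (simp add: mult.assoc[symmetric] sg)
qed

lemma pR_deriv:
  assumes "(\<lambda>r. g r y) differentiable (at x)"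
  shows "((\<lambda>r. g r y) has_real_derivative pR g x y) (at x)"
  using assms DERIV_deriv_iff_real_differentiable unfolding pR_def by blast

lemma pu_deriv:
  assumes "(\<lambda>v. g x v) differentiable (at y)"
  shows "((\<lambda>v. g x v) has_real_derivative pu g x y) (at y)"
  using assms DERIV_deriv_iff_real_differentiable unfolding pu_def by blast

lemma mvt_both:
  fixes f f' :: "real \<Rightarrow> real"
  assumes "\<And>x. (f has_real_derivative f' x) (at x)" "R \<noteq> R0"
  shows "\<exists>z. \<bar>z - R0\<bar> \<le> \<bar>R - R0\<bar> \<and> f R - f R0 = (R - R0) * f' z"
proof (cases "R < R0")
  case True
  from MVT2[OF True, of f f'] assms obtain z where "R < z" "z < R0" "f R0 - f R = (R0 - R) * f' z" by blast
  then show ?thesis by (intro exI[of _ z]) (auto simp: algebra_simps)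
next
  case False
  then have "R0 < R" using assms by simp
  from MVT2[OF this, of f f'] assms obtain z where "R0 < z" "z < R" "f R - f R0 = (R - R0) * f' z" by blast
  then show ?thesis by (intro exI[of _ z]) auto
qed

lemma chain_line:
  fixes g :: "real \<Rightarrow> real \<Rightarrow> real"
  assumes dR: "\<And>x y. (\<lambda>r. g r y) differentiable (at x)"
    and du: "\<And>x y. (\<lambda>v. g x v) differentiable (at y)"
    and c: "continuous_on UNIV (\<lambda>(x,y). pR g x y)"
  shows "((\<lambda>R. g R (a + b*R)) has_real_derivative (pR g R0 (a+b*R0) + b * pu g R0 (a+b*R0))) (at R0)"
proof -
  define x0 where "x0 = a + b*R0"
  have q2: "((\<lambda>R. (g R0 (a+b*R) - g R0 (a+b*R0)) / (R - R0)) \<longlongrightarrow> pu g R0 x0 * b) (at R0)"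
  proof -
    have "((\<lambda>R. g R0 (a+b*R)) has_real_derivative pu g R0 x0 * b) (at R0)"
      unfolding x0_def
      by (rule DERIV_chain2[OF pu_deriv[OF du]]) (auto intro!: derivative_eq_intros)
    then show ?thesis unfolding has_field_derivative_iff x0_def .
  qed
  have q1: "((\<lambda>R. (g R (a+b*R) - g R0 (a+b*R)) / (R - R0)) \<longlongrightarrow> pR g R0 x0) (at R0)"
  proof (rule tendstoI)
    fix e :: real assume e: "e > 0"
    from c have "\<exists>d>0. \<forall>p'\<in>UNIV. dist p' (R0, x0) < d \<longrightarrow> dist ((\<lambda>(x,y). pR g x y) p') ((\<lambda>(x,y). pR g x y) (R0, x0)) < e"
      unfolding continuous_on_iff using e by blast
    then obtain d where d: "d > 0" and dd: "\<And>r x. dist (r, x) (R0, x0) < d \<Longrightarrow> dist (pR g r x) (pR g R0 x0) < e"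
      by force
    show "\<forall>\<^sub>F R in at R0. dist ((g R (a+b*R) - g R0 (a+b*R)) / (R - R0)) (pR g R0 x0) < e"
      unfolding eventually_at
    proof (intro exI[of _ "d / (1 + \<bar>b\<bar>)"] conjI ballI impI)
      show "0 < d / (1 + \<bar>b\<bar>)" using d by (simp add: add_pos_nonneg)
      fix R assume R: "R \<in> UNIV" "R \<noteq> R0 \<and> dist R R0 < d / (1 + \<bar>b\<bar>)"
      have "\<exists>z. \<bar>z - R0\<bar> \<le> \<bar>R - R0\<bar> \<and> g R (a+b*R) - g R0 (a+b*R) = (R - R0) * pR g z (a+b*R)"
        by (rule mvt_both[of "\<lambda>r. g r (a+b*R)"]) (use pR_deriv[OF dR] R in auto)
      then obtain z where z: "\<bar>z - R0\<bar> \<le> \<bar>R - R0\<bar>" and zeq: "g R (a+b*R) - g R0 (a+b*R) = (R - R0) * pR g z (a+b*R)"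
        by blast
      have quot: "(g R (a+b*R) - g R0 (a+b*R)) / (R - R0) = pR g z (a+b*R)" using R zeq by simp
      have "dist (z, a+b*R) (R0, x0) \<le> \<bar>z - R0\<bar> + \<bar>(a+b*R) - x0\<bar>"
        unfolding dist_Pair_Pair dist_real_def using sqrt_sum_squares_le_sum_abs[of "z - R0" "(a+b*R) - x0"] by simp
      also have "\<bar>(a+b*R) - x0\<bar> = \<bar>b\<bar> * \<bar>R - R0\<bar>" unfolding x0_def by (simp add: abs_mult[symmetric] algebra_simps)
      also have "\<bar>z - R0\<bar> + \<bar>b\<bar> * \<bar>R - R0\<bar> \<le> (1 + \<bar>b\<bar>) * \<bar>R - R0\<bar>" using z by (simp add: algebra_simps)
      also have "\<dots> < d" using R by (simp add: dist_real_def field_simps)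
      finally have "dist (z, a+b*R) (R0, x0) < d" .
      then show "dist ((g R (a+b*R) - g R0 (a+b*R)) / (R - R0)) (pR g R0 x0) < e"
        unfolding quot by (rule dd)
    qed
  qed
  have "((\<lambda>R. (g R (a+b*R) - g R0 (a+b*R)) / (R - R0) + (g R0 (a+b*R) - g R0 (a+b*R0)) / (R - R0))
          \<longlongrightarrow> pR g R0 x0 + pu g R0 x0 * b) (at R0)"
    by (rule tendsto_add[OF q1 q2])
  moreover have "(\<lambda>R. (g R (a+b*R) - g R0 (a+b*R)) / (R - R0) + (g R0 (a+b*R) - g R0 (a+b*R0)) / (R - R0))
      = (\<lambda>R. (g R (a+b*R) - g R0 (a+b*R0)) / (R - R0))"
    by (simp add: fun_eq_iff add_divide_distrib[symmetric])
  ultimately show ?thesis unfolding has_field_derivative_iff x0_def by (simp add: mult.commute)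
qed

definition good :: "(real \<Rightarrow> real \<Rightarrow> real) \<Rightarrow> bool" where
  "good g \<longleftrightarrow> (\<forall>x y. (\<lambda>r. g r y) differentiable (at x)) \<and> (\<forall>x y. (\<lambda>v. g x v) differentiable (at y))
     \<and> continuous_on UNIV (\<lambda>(x,y). g x y) \<and> continuous_on UNIV (\<lambda>(x,y). pR g x y)
     \<and> continuous_on UNIV (\<lambda>(x,y). pu g x y)"

lemma cont2:
  assumes "continuous_on UNIV (\<lambda>(x,y). g x y)" "continuous_on S a" "continuous_on S b"
  shows "continuous_on S (\<lambda>z. g (a z) (b z))"
proof -
  have "continuous_on S (\<lambda>z. (\<lambda>(x,y). g x y) (a z, b z))"
    by (rule continuous_on_compose2[OF assms(1)]) (auto intro!: continuous_intros assms(2,3))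
  then show ?thesis by simp
qed

lemma split_cont: "continuous_on S (\<lambda>p. F (fst p) (snd p)) \<Longrightarrow> continuous_on S (\<lambda>(x,t). F x t)"
  by (simp add: split_beta)

lemma TD:
  fixes \<kappa> \<kappa>R g :: "real \<Rightarrow> real \<Rightarrow> real"
  assumes g: "good g"
    and kd: "\<And>R t. ((\<lambda>r. \<kappa> r t) has_real_derivative \<kappa>R R t) (at R)"
    and kc: "continuous_on UNIV (\<lambda>(R,t). \<kappa> R t)"
    and kRc: "continuous_on UNIV (\<lambda>(R,t). \<kappa>R R t)"
  shows "((\<lambda>R. integral {-1..1} (\<lambda>t. \<kappa> R t * g R (s+R*t))) has_real_derivative
           integral {-1..1} (\<lambda>t. \<kappa>R R0 t * g R0 (s+R0*t) + \<kappa> R0 t * (pR g R0 (s+R0*t) + t * pu g R0 (s+R0*t)))) (at R0)"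
proof -
  from g have dR: "\<And>x y. (\<lambda>r. g r y) differentiable (at x)" and du: "\<And>x y. (\<lambda>v. g x v) differentiable (at y)"
    and gc: "continuous_on UNIV (\<lambda>(x,y). g x y)" and gRc: "continuous_on UNIV (\<lambda>(x,y). pR g x y)"
    and guc: "continuous_on UNIV (\<lambda>(x,y). pu g x y)"
    unfolding good_def by auto
  have fx: "((\<lambda>r. \<kappa> r t * g r (s + r*t)) has_real_derivative
          \<kappa>R R t * g R (s+R*t) + \<kappa> R t * (pR g R (s+R*t) + t * pu g R (s+R*t))) (at R)" for R t
  proof -
    have "((\<lambda>r. g r (s + t*r)) has_real_derivative (pR g R (s+t*R) + t * pu g R (s+t*R))) (at R)"
      by (rule chain_line[OF dR du gRc])
    then have "((\<lambda>r. g r (s + r*t)) has_real_derivative (pR g R (s+R*t) + t * pu g R (s+R*t))) (at R)"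
      by (simp add: mult.commute)
    from DERIV_mult[OF kd this] show ?thesis by (simp add: algebra_simps)
  qed
  have c1: "continuous_on S (\<lambda>p. \<kappa> (fst p) (snd p) * g (fst p) (s + fst p * snd p))" for S
    by (intro continuous_intros cont2[OF kc] cont2[OF gc])
  have c2: "continuous_on S (\<lambda>p. \<kappa>R (fst p) (snd p) * g (fst p) (s + fst p * snd p)
       + \<kappa> (fst p) (snd p) * (pR g (fst p) (s + fst p * snd p) + snd p * pu g (fst p) (s + fst p * snd p)))" for S
    by (intro continuous_intros cont2[OF kc] cont2[OF kRc] cont2[OF gc] cont2[OF gRc] cont2[OF guc])
  have int: "(\<lambda>t. \<kappa> R t * g R (s+R*t)) integrable_on cbox (-1) 1" for R
  proof -
    have "continuous_on (cbox (-1) 1) (\<lambda>t. \<kappa> R t * g R (s+R*t))"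
      by (intro continuous_intros cont2[OF kc] cont2[OF gc])
    then show ?thesis by (rule integrable_continuous)
  qed
  have "((\<lambda>R. integral (cbox (-1) 1) (\<lambda>t. \<kappa> R t * g R (s+R*t))) has_real_derivative
           integral (cbox (-1) 1) (\<lambda>t. \<kappa>R R0 t * g R0 (s+R0*t) + \<kappa> R0 t * (pR g R0 (s+R0*t) + t * pu g R0 (s+R0*t)))) (at R0 within UNIV)"
  proof (rule leibniz_rule_field_derivative)
    show "continuous_on (UNIV \<times> cbox (- 1) 1) (\<lambda>(x, t). \<kappa>R x t * g x (s + x * t) + \<kappa> x t * (pR g x (s + x * t) + t * pu g x (s + x * t)))"
      by (rule split_cont[OF c2])
  qed (use fx int in auto)
  then show ?thesis by (simp add: cbox_interval)
qed

lemma f0_chain [derivative_intros]: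
  "(h has_real_derivative h') (at x within S) \<Longrightarrow> ((\<lambda>x. f_ser (h x)) has_real_derivative f1 (h x) * h') (at x within S)"
  using DERIV_chain'[of h h' x S f_ser "f1 (h x)"] f0_deriv by (simp add: mult.commute)
lemma f1_chain [derivative_intros]:
  "(h has_real_derivative h') (at x within S) \<Longrightarrow> ((\<lambda>x. f1 (h x)) has_real_derivative f2 (h x) * h') (at x within S)"
  using DERIV_chain'[of h h' x S f1 "f2 (h x)"] f1_deriv by (simp add: mult.commute)
lemma f2_chain [derivative_intros]:
  "(h has_real_derivative h') (at x within S) \<Longrightarrow> ((\<lambda>x. f2 (h x)) has_real_derivative f3 (h x) * h') (at x within S)"
  using DERIV_chain'[of h h' x S f2 "f3 (h x)"] f2_deriv by (simp add: mult.commute)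

lemma goodD:
  assumes "good g"
  shows "\<And>x y. (\<lambda>r. g r y) differentiable (at x)" "\<And>x y. (\<lambda>v. g x v) differentiable (at y)"
    "continuous_on UNIV (\<lambda>(x,y). g x y)" "continuous_on UNIV (\<lambda>(x,y). pR g x y)"
    "continuous_on UNIV (\<lambda>(x,y). pu g x y)"
  using assms unfolding good_def by auto

lemma gu_chain:
  assumes "good g"
  shows "((\<lambda>t. g R (a + b*t)) has_real_derivative pu g R (a+b*t) * b) (at t)"
  by (rule DERIV_chain2[OF pu_deriv[OF goodD(2)[OF assms]]]) (auto intro!: derivative_eq_intros)

lemma ftc11:
  fixes \<Phi> \<Phi>' :: "real \<Rightarrow> real"
  assumes "\<And>t. (\<Phi> has_real_derivative \<Phi>' t) (at t)"
  shows "(\<Phi>' has_integral (\<Phi> 1 - \<Phi> (-1))) {-1..1}"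
  by (rule fundamental_theorem_of_calculus)
     (auto intro: has_field_derivative_at_within assms simp: has_real_derivative_iff_has_vector_derivative[symmetric])

lemma hint:
  fixes h :: "real \<Rightarrow> real"
  assumes "continuous_on {-1..1} h"
  shows "(h has_integral integral {-1..1} h) {-1..1}"
  using assms by (intro integrable_integral integrable_continuous_real)

lemma D1:
  assumes g: "good g"
  shows "(Ag s g has_real_derivative (Ag s (pR g) R + Bg s g R + Ag s g R)) (at R)"
proof -
  note gc = goodD(3)[OF g] and gRc = goodD(4)[OF g] and guc = goodD(5)[OF g]
  define q where "q t = R^2*(t^2-1)" for t
  define J where "J r = integral {-1..1} (\<lambda>t. f_ser (r^2*(t^2-1)) * g r (s+r*t))" for r
  define J' where "J' = integral {-1..1} (\<lambda>t. f1 (R^2*(t^2-1)) * (2*R*(t^2-1)) * g R (s+R*t)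
        + f_ser (R^2*(t^2-1)) * (pR g R (s+R*t) + t * pu g R (s+R*t)))"
  have dJ: "(J has_real_derivative J') (at R)"
    unfolding J_def J'_def
  proof (rule TD[OF g])
    show "((\<lambda>r. f_ser (r^2*(t^2-1))) has_real_derivative f1 (R'^2*(t^2-1)) * (2*R'*(t^2-1))) (at R')" for R' t
      by (auto intro!: derivative_eq_intros)
    show "continuous_on UNIV (\<lambda>(R, t). f_ser (R^2*(t^2-1)))"
      by (rule split_cont) (intro continuous_intros)
    show "continuous_on UNIV (\<lambda>(R, t). f1 (R^2*(t^2-1)) * (2*R*(t^2-1)))"
      by (rule split_cont) (intro continuous_intros)
  qed
  have AgJ: "Ag s g = (\<lambda>r. r/2 * exp (r/2) * J r)" by (simp add: Ag_def J_def fun_eq_iff)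
  define e where "e = exp (R/2)"
  define D where "D = (1/2 * e + R/2 * (e/2)) * J R + R/2 * e * J'"
  have dA: "(Ag s g has_real_derivative D) (at R)"
    unfolding AgJ D_def e_def by (rule derivative_eq_intros dJ refl | simp add: algebra_simps)+
  define gt where "gt t = g R (s+R*t)" for t
  define gR where "gR t = pR g R (s+R*t)" for t
  define gu where "gu t = pu g R (s+R*t)" for t
  have cq: "continuous_on S q" for S unfolding q_def by (intro continuous_intros)
  have cg: "continuous_on S gt" for S unfolding gt_def by (intro continuous_intros cont2[OF gc])
  have cgR: "continuous_on S gR" for S unfolding gR_def by (intro continuous_intros cont2[OF gRc])
  have cgu: "continuous_on S gu" for S unfolding gu_def by (intro continuous_intros cont2[OF guc])
  have hJ: "((\<lambda>t. f_ser (q t) * gt t) has_integral J R) {-1..1}"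
    unfolding J_def q_def gt_def[symmetric] by (rule hint) (intro continuous_intros cg)
  have hJ': "((\<lambda>t. f1 (q t) * (2*R*(t^2-1)) * gt t + f_ser (q t) * (gR t + t * gu t)) has_integral J') {-1..1}"
    unfolding J'_def q_def gt_def[symmetric] gR_def[symmetric] gu_def[symmetric] by (rule hint) (intro continuous_intros cg cgR cgu)
  define JR where "JR = integral {-1..1} (\<lambda>t. f_ser (q t) * gR t)"
  have hJR: "((\<lambda>t. f_ser (q t) * gR t) has_integral JR) {-1..1}"
    unfolding JR_def by (rule hint) (intro continuous_intros cgR cq)
  define K where "K = integral {-1..1} (\<lambda>t. (f_ser (q t)/2 + 2*R*f1 (q t)) * gt t)"
  have hK: "((\<lambda>t. (f_ser (q t)/2 + 2*R*f1 (q t)) * gt t) has_integral K) {-1..1}"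
    unfolding K_def by (rule hint) (auto intro!: continuous_intros cg cq)
  define \<Phi> where "\<Phi> t = f_ser (q t) * t * gt t" for t
  define \<Phi>' where "\<Phi>' t = f1 (q t) * (2*R^2*t) * t * gt t + f_ser (q t) * gt t + f_ser (q t) * t * (gu t * R)" for t
  have dPhi: "(\<Phi> has_real_derivative \<Phi>' t) (at t)" for t
  proof -
    have "((\<lambda>t. g R (s + R*t)) has_real_derivative gu t * R) (at t)"
      unfolding gu_def by (rule gu_chain[OF g])
    then show ?thesis unfolding \<Phi>_def \<Phi>'_def q_def gt_def
      by (auto intro!: derivative_eq_intros simp: algebra_simps power2_eq_square)
  qed
  have hPhi: "(\<Phi>' has_integral (g R (s+R) + g R (s-R))) {-1..1}"
    using ftc11[OF dPhi] by (simp add: \<Phi>_def q_def gt_def f0_at0)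
  have comb: "((\<lambda>t. (1/2 * e + R/2 * (e/2)) * (f_ser (q t) * gt t)
        + R/2 * e * (f1 (q t) * (2*R*(t^2-1)) * gt t + f_ser (q t) * (gR t + t * gu t))
        - R/2 * e * (f_ser (q t) * gR t)
        + R/2 * e * ((f_ser (q t)/2 + 2*R*f1 (q t)) * gt t)
        - R/2 * e * (f_ser (q t) * gt t))
      has_integral ((1/2 * e + R/2 * (e/2)) * J R + R/2 * e * J' - R/2 * e * JR + R/2 * e * K - R/2 * e * J R)) {-1..1}"
    by (intro has_integral_add has_integral_diff has_integral_mult_right hJ hJ' hJR hK)
  have funeq: "(\<lambda>t. (1/2 * e + R/2 * (e/2)) * (f_ser (q t) * gt t)
        + R/2 * e * (f1 (q t) * (2*R*(t^2-1)) * gt t + f_ser (q t) * (gR t + t * gu t))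
        - R/2 * e * (f_ser (q t) * gR t)
        + R/2 * e * ((f_ser (q t)/2 + 2*R*f1 (q t)) * gt t)
        - R/2 * e * (f_ser (q t) * gt t)) = (\<lambda>t. e/2 * \<Phi>' t)"
    by (rule ext) (simp add: \<Phi>'_def algebra_simps power2_eq_square)
  have val: "(1/2 * e + R/2 * (e/2)) * J R + R/2 * e * J' - R/2 * e * JR + R/2 * e * K - R/2 * e * J R
      = e/2 * (g R (s+R) + g R (s-R))"
    using comb unfolding funeq using has_integral_unique[OF _ has_integral_mult_right[OF hPhi]] by blast
  have "D = Ag s (pR g) R + Bg s g R + Ag s g R"
    unfolding D_def Ag_def Bg_def e_def[symmetric] J_def[symmetric] q_def[symmetric] gR_def[symmetric] gt_def[symmetric]
      JR_def[symmetric] K_def[symmetric]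
    using val by (simp add: J_def q_def gt_def)
  then show ?thesis using dA by simp
qed

lemma diag_plus:
  assumes g: "good g"
  shows "((\<lambda>r. g r (s + r)) has_real_derivative pR g R (s+R) + pu g R (s+R)) (at R)"
  using chain_line[OF goodD(1)[OF g] goodD(2)[OF g] goodD(4)[OF g], of s 1 R] by simp

lemma diag_minus:
  assumes g: "good g"
  shows "((\<lambda>r. g r (s - r)) has_real_derivative pR g R (s-R) - pu g R (s-R)) (at R)"
  using chain_line[OF goodD(1)[OF g] goodD(2)[OF g] goodD(4)[OF g], of s "-1" R] by simp

lemma alg2:
  fixes a b c q R t e G GR GU GUU :: real
  assumes ode: "q*c + b + a/16 = 0" and q: "q = R^2*(t^2-1)"
  shows "- (1/2*e + R/2*(e/2)) * ((a/2 + 2*R*b) * G)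
     - R/2*e * ((b * (2*R*(t^2-1)) / 2 + 2*b + 2*R*(c * (2*R*(t^2-1)))) * G + (a/2 + 2*R*b) * (GR + t*GU))
     + R/2*e * ((a/2 + 2*R*b) * GR) - R/2*e * (a * GUU)
     + e/2 * (b * (2*R^2*t) * GU + a * (GUU * R))
     - e/2 * (2*R*b*G + 2*R*t*(c*(2*R^2*t))*G + 2*R*t*b*(GU*R))
     + e/2 * ((b*(2*R^2*t)/2 + 2*R*(c*(2*R^2*t))) * t * G + (a/2 + 2*R*b) * G + (a/2 + 2*R*b) * t * (GU*R)) = 0"
proof -
  have b: "b = - q*c - a/16" using ode by simp
  show ?thesis unfolding b q by (simp add: field_simps power2_eq_square)
qed

lemma D2:
  assumes g: "good g" and gu: "good (pu g)"
  shows "(Bg s g has_real_derivative (Bg s (pR g) R + Ag s (pu (pu g)) R)) (at R)"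
proof -
  note gc = goodD(3)[OF g] and gRc = goodD(4)[OF g] and guc = goodD(5)[OF g] and guuc = goodD(5)[OF gu]
  define q where "q t = R^2*(t^2-1)" for t
  define K where "K r = integral {-1..1} (\<lambda>t. (f_ser (r^2*(t^2-1))/2 + 2*r*f1 (r^2*(t^2-1))) * g r (s+r*t))" for r
  define K' where "K' = integral {-1..1} (\<lambda>t. (f1 (R^2*(t^2-1)) * (2*R*(t^2-1)) / 2 + 2 * f1 (R^2*(t^2-1)) + 2*R*(f2 (R^2*(t^2-1)) * (2*R*(t^2-1)))) * g R (s+R*t)
        + (f_ser (R^2*(t^2-1))/2 + 2*R*f1 (R^2*(t^2-1))) * (pR g R (s+R*t) + t * pu g R (s+R*t)))"
  have dK: "(K has_real_derivative K') (at R)"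
    unfolding K_def K'_def
  proof (rule TD[OF g])
    show "((\<lambda>r. f_ser (r^2*(t^2-1))/2 + 2*r*f1 (r^2*(t^2-1))) has_real_derivative
        f1 (R'^2*(t^2-1)) * (2*R'*(t^2-1)) / 2 + 2 * f1 (R'^2*(t^2-1)) + 2*R'*(f2 (R'^2*(t^2-1)) * (2*R'*(t^2-1)))) (at R')" for R' t
      by (auto intro!: derivative_eq_intros simp: field_simps)
    show "continuous_on UNIV (\<lambda>(R, t). f_ser (R^2*(t^2-1))/2 + 2*R*f1 (R^2*(t^2-1)))"
      by (rule split_cont) (auto intro!: continuous_intros)
    show "continuous_on UNIV (\<lambda>(R, t). f1 (R^2*(t^2-1)) * (2*R*(t^2-1)) / 2 + 2 * f1 (R^2*(t^2-1)) + 2*R*(f2 (R^2*(t^2-1)) * (2*R*(t^2-1))))"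
      by (rule split_cont) (auto intro!: continuous_intros)
  qed
  have BgK: "Bg s g = (\<lambda>r. exp (r/2)/2 * (g r (s+r) + g r (s-r)) - r/2 * exp (r/2) * K r)"
    by (simp add: Bg_def K_def fun_eq_iff)
  define e where "e = exp (R/2)"
  define gp where "gp = g R (s+R)"
  define gm where "gm = g R (s-R)"
  define gup where "gup = pu g R (s+R)"
  define gum where "gum = pu g R (s-R)"
  define gRp where "gRp = pR g R (s+R)"
  define gRm where "gRm = pR g R (s-R)"
  define D where "D = (e/2/2) * (gp + gm) + e/2 * ((gRp + gup) + (gRm - gum)) - ((1/2*e + R/2*(e/2)) * K R + R/2 * e * K')"
  have dB: "(Bg s g has_real_derivative D) (at R)"
    unfolding BgK D_def e_def gp_def gm_def gup_def gum_def gRp_def gRm_def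
    by (rule derivative_eq_intros dK diag_plus[OF g] diag_minus[OF g] refl | simp add: algebra_simps)+
  define gt where "gt t = g R (s+R*t)" for t
  define gR where "gR t = pR g R (s+R*t)" for t
  define gu' where "gu' t = pu g R (s+R*t)" for t
  define guu where "guu t = pu (pu g) R (s+R*t)" for t
  have cq: "continuous_on S q" for S unfolding q_def by (intro continuous_intros)
  have cg: "continuous_on S gt" for S unfolding gt_def by (intro continuous_intros cont2[OF gc])
  have cgR: "continuous_on S gR" for S unfolding gR_def by (intro continuous_intros cont2[OF gRc])
  have cgu: "continuous_on S gu'" for S unfolding gu'_def by (intro continuous_intros cont2[OF guc])
  have cguu: "continuous_on S guu" for S unfolding guu_def by (intro continuous_intros cont2[OF guuc])
  define kap where "kap t = f_ser (q t)/2 + 2*R*f1 (q t)" for t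
  define kapR where "kapR t = f1 (q t) * (2*R*(t^2-1)) / 2 + 2 * f1 (q t) + 2*R*(f2 (q t) * (2*R*(t^2-1)))" for t
  have ck: "continuous_on S kap" for S unfolding kap_def by (auto intro!: continuous_intros cq)
  have ckR: "continuous_on S kapR" for S unfolding kapR_def by (auto intro!: continuous_intros cq)
  have hK: "((\<lambda>t. kap t * gt t) has_integral K R) {-1..1}"
    unfolding K_def kap_def q_def gt_def by (rule hint) (auto intro!: continuous_intros cont2[OF gc])
  have hK': "((\<lambda>t. kapR t * gt t + kap t * (gR t + t * gu' t)) has_integral K') {-1..1}"
    unfolding K'_def kapR_def kap_def q_def gt_def gR_def gu'_def by (rule hint) (auto intro!: continuous_intros cont2[OF gc] cont2[OF gRc] cont2[OF guc])
  define KR where "KR = integral {-1..1} (\<lambda>t. kap t * gR t)"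
  have hKR: "((\<lambda>t. kap t * gR t) has_integral KR) {-1..1}"
    unfolding KR_def by (rule hint) (intro continuous_intros ck cgR)
  define Juu where "Juu = integral {-1..1} (\<lambda>t. f_ser (q t) * guu t)"
  have hJuu: "((\<lambda>t. f_ser (q t) * guu t) has_integral Juu) {-1..1}"
    unfolding Juu_def by (rule hint) (intro continuous_intros cguu cq)
  have dgt: "(gt has_real_derivative gu' t * R) (at t)" for t
    unfolding gt_def gu'_def by (rule gu_chain[OF g])
  have dgu: "(gu' has_real_derivative guu t * R) (at t)" for t
    unfolding gu'_def guu_def by (rule gu_chain[OF gu])
  have hA: "((\<lambda>t. f1 (q t) * (2*R^2*t) * gu' t + f_ser (q t) * (guu t * R)) has_integral (gup - gum)) {-1..1}"
  proof -
    have "((\<lambda>t. f_ser (q t) * gu' t) has_real_derivative f1 (q t) * (2*R^2*t) * gu' t + f_ser (q t) * (guu t * R)) (at t)" for t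
      unfolding q_def by (auto intro!: derivative_eq_intros dgu simp: algebra_simps power2_eq_square)
    from ftc11[OF this] show ?thesis by (simp add: q_def f0_at0 gu'_def gup_def gum_def)
  qed
  have hBb: "((\<lambda>t. 2*R*f1 (q t)*gt t + 2*R*t*(f2 (q t)*(2*R^2*t))*gt t + 2*R*t*f1 (q t)*(gu' t*R)) has_integral (- R/8 * (gp + gm))) {-1..1}"
  proof -
    have dd: "((\<lambda>t. 2*R*t*f1 (q t) * gt t) has_real_derivative 2*R*f1 (q t)*gt t + 2*R*t*(f2 (q t)*(2*R^2*t))*gt t + 2*R*t*f1 (q t)*(gu' t*R)) (at t)" for t
      unfolding q_def by (auto intro!: derivative_eq_intros dgt simp: algebra_simps power2_eq_square)
    show ?thesis by (rule has_integral_eq_rhs[OF ftc11[OF dd]]) (simp add: q_def f1_at0 gt_def gp_def gm_def field_simps)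
  qed
  have hC: "((\<lambda>t. (f1 (q t)*(2*R^2*t)/2 + 2*R*(f2 (q t)*(2*R^2*t))) * t * gt t + kap t * gt t + kap t * t * (gu' t*R))
       has_integral ((1/2 - R/8) * (gp + gm))) {-1..1}"
  proof -
    have dd: "((\<lambda>t. kap t * t * gt t) has_real_derivative (f1 (q t)*(2*R^2*t)/2 + 2*R*(f2 (q t)*(2*R^2*t))) * t * gt t + kap t * gt t + kap t * t * (gu' t*R)) (at t)" for t
      unfolding q_def kap_def by (auto intro!: derivative_eq_intros dgt simp: algebra_simps power2_eq_square)
    show ?thesis by (rule has_integral_eq_rhs[OF ftc11[OF dd]]) (simp add: q_def kap_def f0_at0 f1_at0 gt_def gp_def gm_def field_simps)
  qed
  have comb: "((\<lambda>t. - (1/2*e + R/2*(e/2)) * (kap t * gt t) - R/2*e * (kapR t * gt t + kap t * (gR t + t * gu' t))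
        + R/2*e * (kap t * gR t) - R/2*e * (f_ser (q t) * guu t)
        + e/2 * (f1 (q t) * (2*R^2*t) * gu' t + f_ser (q t) * (guu t * R))
        - e/2 * (2*R*f1 (q t)*gt t + 2*R*t*(f2 (q t)*(2*R^2*t))*gt t + 2*R*t*f1 (q t)*(gu' t*R))
        + e/2 * ((f1 (q t)*(2*R^2*t)/2 + 2*R*(f2 (q t)*(2*R^2*t))) * t * gt t + kap t * gt t + kap t * t * (gu' t*R)))
      has_integral (- (1/2*e + R/2*(e/2)) * K R - R/2*e * K' + R/2*e * KR - R/2*e * Juu
        + e/2 * (gup - gum) - e/2 * (- R/8 * (gp + gm)) + e/2 * ((1/2 - R/8) * (gp + gm)))) {-1..1}"
    by (intro has_integral_add has_integral_diff has_integral_mult_right has_integral_neg hK hK' hKR hJuu hA hBb hC)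
  have funeq: "(\<lambda>t. - (1/2*e + R/2*(e/2)) * (kap t * gt t) - R/2*e * (kapR t * gt t + kap t * (gR t + t * gu' t))
        + R/2*e * (kap t * gR t) - R/2*e * (f_ser (q t) * guu t)
        + e/2 * (f1 (q t) * (2*R^2*t) * gu' t + f_ser (q t) * (guu t * R))
        - e/2 * (2*R*f1 (q t)*gt t + 2*R*t*(f2 (q t)*(2*R^2*t))*gt t + 2*R*t*f1 (q t)*(gu' t*R))
        + e/2 * ((f1 (q t)*(2*R^2*t)/2 + 2*R*(f2 (q t)*(2*R^2*t))) * t * gt t + kap t * gt t + kap t * t * (gu' t*R))) = (\<lambda>t. 0)"
  proof
    fix t
    show "- (1/2*e + R/2*(e/2)) * (kap t * gt t) - R/2*e * (kapR t * gt t + kap t * (gR t + t * gu' t))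
        + R/2*e * (kap t * gR t) - R/2*e * (f_ser (q t) * guu t)
        + e/2 * (f1 (q t) * (2*R^2*t) * gu' t + f_ser (q t) * (guu t * R))
        - e/2 * (2*R*f1 (q t)*gt t + 2*R*t*(f2 (q t)*(2*R^2*t))*gt t + 2*R*t*f1 (q t)*(gu' t*R))
        + e/2 * ((f1 (q t)*(2*R^2*t)/2 + 2*R*(f2 (q t)*(2*R^2*t))) * t * gt t + kap t * gt t + kap t * t * (gu' t*R)) = 0"
      unfolding kap_def kapR_def
      by (rule alg2[OF f_ode[of "q t"]]) (simp add: q_def)
  qed
  have val: "- (1/2*e + R/2*(e/2)) * K R - R/2*e * K' + R/2*e * KR - R/2*e * Juu
        + e/2 * (gup - gum) - e/2 * (- R/8 * (gp + gm)) + e/2 * ((1/2 - R/8) * (gp + gm)) = 0"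
    using comb unfolding funeq using has_integral_unique[OF _ has_integral_0] by blast
  have A1: "Ag s (pu (pu g)) R = R/2*e*Juu" unfolding Ag_def Juu_def e_def q_def guu_def by simp
  have B1: "Bg s (pR g) R = e/2*(gRp + gRm) - R/2*e*KR"
    unfolding Bg_def KR_def e_def q_def gR_def kap_def gRp_def gRm_def by simp
  have lin: "D - (e/2*(gRp + gRm) - R/2*e*KR + R/2*e*Juu) = - (1/2*e + R/2*(e/2)) * K R - R/2*e * K' + R/2*e * KR - R/2*e * Juu
        + e/2 * (gup - gum) - e/2 * (- R/8 * (gp + gm)) + e/2 * ((1/2 - R/8) * (gp + gm))"
    unfolding D_def by (simp add: field_simps)
  have "D = Bg s (pR g) R + Ag s (pu (pu g)) R"
    unfolding A1 B1 using lin val by simp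
  then show ?thesis using dB by simp
qed

lemma test2_good:
  assumes "test2 \<psi>" "g \<in> partials \<psi>"
  shows "good g"
proof -
  have "pR g \<in> partials \<psi>" "pu g \<in> partials \<psi>" using assms(2) by (auto intro: partials.intros)
  then show ?thesis using assms unfolding test2_def good_def by blast
qed

lemma test2_cont:
  assumes "test2 \<psi>" "g \<in> partials \<psi>"
  shows "continuous_on UNIV (\<lambda>(R,u). g R u)"
  using assms unfolding test2_def by blast

lemma open_absgt: "open {r::real. K < \<bar>r\<bar>}"
  by (intro open_Collect_less continuous_intros)

lemma partials_support:
  assumes supp: "\<And>R u. K < \<bar>R\<bar> \<or> K < \<bar>u\<bar> \<Longrightarrow> \<psi> R u = 0" and g: "g \<in> partials \<psi>"
  shows "K < \<bar>R\<bar> \<or> K < \<bar>u\<bar> \<Longrightarrow> g R u = 0"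
  using g
proof (induction arbitrary: R u rule: partials.induct)
  case base then show ?case using supp by blast
next
  case (dR g)
  show ?case
  proof (cases "K < \<bar>R\<bar>")
    case True
    have "((\<lambda>r. (0::real)) has_real_derivative 0) (at R)" by simp
    then have "((\<lambda>r. g r u) has_real_derivative 0) (at R)"
      by (rule has_field_derivative_transform_within_open[where S="{r. K < \<bar>r\<bar>}"])
         (use True dR.IH open_absgt in auto)
    then show ?thesis unfolding pR_def by (rule DERIV_imp_deriv)
  next
    case False
    then have u: "K < \<bar>u\<bar>" using dR.prems by simp
    have "(\<lambda>r. g r u) = (\<lambda>r. 0)" using dR.IH u by auto
    then show ?thesis unfolding pR_def by simp
  qed
next
  case (du g)
  show ?case
  proof (cases "K < \<bar>u\<bar>")
    case True
    have "((\<lambda>r. (0::real)) has_real_derivative 0) (at u)" by simp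
    then have "((\<lambda>v. g R v) has_real_derivative 0) (at u)"
      by (rule has_field_derivative_transform_within_open[where S="{r. K < \<bar>r\<bar>}"])
         (use True du.IH open_absgt in auto)
    then show ?thesis unfolding pu_def by (rule DERIV_imp_deriv)
  next
    case False
    then have R: "K < \<bar>R\<bar>" using du.prems by simp
    have "(\<lambda>v. g R v) = (\<lambda>v. 0)" using du.IH R by auto
    then show ?thesis unfolding pu_def by simp
  qed
qed

lemma test2_support:
  assumes "test2 \<psi>"
  obtains K where "K > 0" "\<And>g R u. g \<in> partials \<psi> \<Longrightarrow> K < \<bar>R\<bar> \<or> K < \<bar>u\<bar> \<Longrightarrow> g R u = 0"
proof -
  obtain K0 where K0: "\<And>R u. K0 < \<bar>R\<bar> \<or> K0 < \<bar>u\<bar> \<Longrightarrow> \<psi> R u = 0" using assms unfolding test2_def by blast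
  define K where "K = \<bar>K0\<bar> + 1"
  have "\<And>R u. K < \<bar>R\<bar> \<or> K < \<bar>u\<bar> \<Longrightarrow> \<psi> R u = 0" using K0 unfolding K_def by force
  then have "\<And>g R u. g \<in> partials \<psi> \<Longrightarrow> K < \<bar>R\<bar> \<or> K < \<bar>u\<bar> \<Longrightarrow> g R u = 0"
    using partials_support by blast
  moreover have "K > 0" unfolding K_def by simp
  ultimately show ?thesis using that by blast
qed

lemma partials_sub:
  assumes "g \<in> partials h" "h \<in> partials \<psi>"
  shows "g \<in> partials \<psi>"
  using assms(1) by induction (use assms(2) in \<open>auto intro: partials.intros\<close>)

lemma test2_pR:
  assumes "test2 \<psi>"
  shows "test2 (pR \<psi>)"
proof -
  have p: "pR \<psi> \<in> partials \<psi>" by (auto intro: partials.intros)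
  obtain K where "K > 0" and K: "\<And>g R u. g \<in> partials \<psi> \<Longrightarrow> K < \<bar>R\<bar> \<or> K < \<bar>u\<bar> \<Longrightarrow> g R u = 0"
    using test2_support[OF assms] by blast
  have A: "\<forall>g\<in>partials (pR \<psi>). continuous_on UNIV (\<lambda>(R, u). g R u) \<and>
          (\<forall>R u. (\<lambda>r. g r u) differentiable at R \<and> (\<lambda>v. g R v) differentiable at u)"
  proof
    fix g assume "g \<in> partials (pR \<psi>)"
    then have "g \<in> partials \<psi>" using partials_sub[OF _ p] by blast
    then show "continuous_on UNIV (\<lambda>(R, u). g R u) \<and>
          (\<forall>R u. (\<lambda>r. g r u) differentiable at R \<and> (\<lambda>v. g R v) differentiable at u)"
      using assms unfolding test2_def by blast
  qed
  have B: "\<forall>R u. K < \<bar>R\<bar> \<or> K < \<bar>u\<bar> \<longrightarrow> pR \<psi> R u = 0" using K[OF p] by blast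
  show ?thesis unfolding test2_def using A B by blast
qed

lemma schwarz:
  fixes g :: "real \<Rightarrow> real \<Rightarrow> real"
  assumes dR: "\<And>x y. (\<lambda>r. g r y) differentiable (at x)"
    and du: "\<And>x y. (\<lambda>v. g x v) differentiable (at y)"
    and dRu: "\<And>x y. (\<lambda>v. pR g x v) differentiable (at y)"
    and duR: "\<And>x y. (\<lambda>r. pu g r y) differentiable (at x)"
    and c1: "continuous_on UNIV (\<lambda>(x,y). pu (pR g) x y)"
    and c2: "continuous_on UNIV (\<lambda>(x,y). pR (pu g) x y)"
  shows "pu (pR g) x y = pR (pu g) x y"
proof (rule ccontr)
  assume ne: "pu (pR g) x y \<noteq> pR (pu g) x y"
  define e where "e = \<bar>pu (pR g) x y - pR (pu g) x y\<bar> / 2"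
  have e: "e > 0" using ne by (simp add: e_def)
  from c1 e obtain d1 where d1: "d1 > 0" and dd1: "\<And>p. dist p (x,y) < d1 \<Longrightarrow> dist ((\<lambda>(x,y). pu (pR g) x y) p) ((\<lambda>(x,y). pu (pR g) x y) (x,y)) < e"
    unfolding continuous_on_iff by (metis UNIV_I)
  from c2 e obtain d2 where d2: "d2 > 0" and dd2: "\<And>p. dist p (x,y) < d2 \<Longrightarrow> dist ((\<lambda>(x,y). pR (pu g) x y) p) ((\<lambda>(x,y). pR (pu g) x y) (x,y)) < e"
    unfolding continuous_on_iff by (metis UNIV_I)
  define h where "h = min d1 d2 / 2"
  have h: "h > 0" using d1 d2 by (simp add: h_def)
  have close: "dist (a, b) (x, y) < min d1 d2" if "x < a" "a < x + h" "y < b" "b < y + h" for a b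
  proof -
    have "dist (a, b) (x, y) \<le> \<bar>a - x\<bar> + \<bar>b - y\<bar>"
      unfolding dist_Pair_Pair dist_real_def using sqrt_sum_squares_le_sum_abs[of "a - x" "b - y"] by simp
    also have "\<dots> < h + h" using that by simp
    finally show ?thesis by (simp add: h_def)
  qed
  define \<Delta> where "\<Delta> = g (x+h) (y+h) - g (x+h) y - g x (y+h) + g x y"
  obtain \<xi> where \<xi>: "x < \<xi>" "\<xi> < x + h" and e1: "(g (x+h) (y+h) - g (x+h) y) - (g x (y+h) - g x y) = h * (pR g \<xi> (y+h) - pR g \<xi> y)"
  proof -
    have "\<And>r. ((\<lambda>r. g r (y+h) - g r y) has_real_derivative pR g r (y+h) - pR g r y) (at r)"
      by (intro derivative_intros pR_deriv dR)
    from MVT2[of x "x+h" "\<lambda>r. g r (y+h) - g r y", OF _ this] h that show ?thesis by auto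
  qed
  obtain \<eta> where \<eta>: "y < \<eta>" "\<eta> < y + h" and e2: "pR g \<xi> (y+h) - pR g \<xi> y = h * pu (pR g) \<xi> \<eta>"
  proof -
    have "\<And>v. ((\<lambda>v. pR g \<xi> v) has_real_derivative pu (pR g) \<xi> v) (at v)"
      by (intro pu_deriv dRu)
    from MVT2[of y "y+h" "\<lambda>v. pR g \<xi> v", OF _ this] h that show ?thesis by auto
  qed
  obtain \<eta>' where \<eta>': "y < \<eta>'" "\<eta>' < y + h" and e3: "(g (x+h) (y+h) - g x (y+h)) - (g (x+h) y - g x y) = h * (pu g (x+h) \<eta>' - pu g x \<eta>')"
  proof -
    have "\<And>v. ((\<lambda>v. g (x+h) v - g x v) has_real_derivative pu g (x+h) v - pu g x v) (at v)"
      by (intro derivative_intros pu_deriv du)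
    from MVT2[of y "y+h" "\<lambda>v. g (x+h) v - g x v", OF _ this] h that show ?thesis by auto
  qed
  obtain \<xi>' where \<xi>': "x < \<xi>'" "\<xi>' < x + h" and e4: "pu g (x+h) \<eta>' - pu g x \<eta>' = h * pR (pu g) \<xi>' \<eta>'"
  proof -
    have "\<And>r. ((\<lambda>r. pu g r \<eta>') has_real_derivative pR (pu g) r \<eta>') (at r)"
      by (intro pR_deriv duR)
    from MVT2[of x "x+h" "\<lambda>r. pu g r \<eta>'", OF _ this] h that show ?thesis by auto
  qed
  have "h * (h * pu (pR g) \<xi> \<eta>) = h * (h * pR (pu g) \<xi>' \<eta>')"
    using e1 e2 e3 e4 by (simp add: algebra_simps)
  then have eq: "pu (pR g) \<xi> \<eta> = pR (pu g) \<xi>' \<eta>'" using h by simp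
  have a1: "\<bar>pu (pR g) \<xi> \<eta> - pu (pR g) x y\<bar> < e"
    using dd1[of "(\<xi>, \<eta>)"] close[OF \<xi> \<eta>] by (simp add: dist_real_def)
  have a2: "\<bar>pR (pu g) \<xi>' \<eta>' - pR (pu g) x y\<bar> < e"
    using dd2[of "(\<xi>', \<eta>')"] close[OF \<xi>' \<eta>'] by (simp add: dist_real_def)
  have "\<bar>pu (pR g) x y - pR (pu g) x y\<bar> = \<bar>(pR (pu g) \<xi>' \<eta>' - pR (pu g) x y) - (pu (pR g) \<xi> \<eta> - pu (pR g) x y)\<bar>"
    using eq by simp
  also have "\<dots> \<le> \<bar>pR (pu g) \<xi>' \<eta>' - pR (pu g) x y\<bar> + \<bar>pu (pR g) \<xi> \<eta> - pu (pR g) x y\<bar>"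
    by (rule abs_triangle_ineq4)
  finally have X: "\<bar>pu (pR g) x y - pR (pu g) x y\<bar> \<le> \<bar>pR (pu g) \<xi>' \<eta>' - pR (pu g) x y\<bar> + \<bar>pu (pR g) \<xi> \<eta> - pu (pR g) x y\<bar>" .
  have triv: "X \<le> A + B \<Longrightarrow> B < X/2 \<Longrightarrow> A < X/2 \<Longrightarrow> False" for X A B :: real by linarith
  show False by (rule triv[OF X a1[unfolded e_def] a2[unfolded e_def]])
qed

lemma test2_schwarz:
  assumes "test2 \<psi>" "g \<in> partials \<psi>"
  shows "pu (pR g) = pR (pu g)"
proof (intro ext)
  fix x y
  have m: "pR g \<in> partials \<psi>" "pu g \<in> partials \<psi>" "pu (pR g) \<in> partials \<psi>" "pR (pu g) \<in> partials \<psi>"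
    using assms(2) by (auto intro: partials.intros)
  show "pu (pR g) x y = pR (pu g) x y"
    by (rule schwarz) (use assms m in \<open>auto simp: test2_def\<close>)
qed

lemma Ag_lin:
  assumes c1: "continuous_on UNIV (\<lambda>(x,y). g1 x y)" and c2: "continuous_on UNIV (\<lambda>(x,y). g2 x y)"
    and c3: "continuous_on UNIV (\<lambda>(x,y). g3 x y)"
  shows "Ag s (\<lambda>R u. g1 R u - g2 R u + g3 R u) R = Ag s g1 R - Ag s g2 R + Ag s g3 R"
proof -
  let ?k = "\<lambda>t. f_ser (R^2*(t^2-1))"
  have i: "(\<lambda>t. ?k t * gi R (s+R*t)) integrable_on {-1..1}" if "continuous_on UNIV (\<lambda>(x,y). gi x y)" for gi
    by (intro integrable_continuous_real continuous_intros cont2[OF that])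
  have C: "integral {-1..1} (\<lambda>t. ?k t * (g1 R (s+R*t) - g2 R (s+R*t) + g3 R (s+R*t)))
      = integral {-1..1} (\<lambda>t. ?k t * g1 R (s+R*t) - ?k t * g2 R (s+R*t) + ?k t * g3 R (s+R*t))"
    by (simp only: distrib_left right_diff_distrib)
  also have "\<dots> = integral {-1..1} (\<lambda>t. ?k t * g1 R (s+R*t)) - integral {-1..1} (\<lambda>t. ?k t * g2 R (s+R*t))
       + integral {-1..1} (\<lambda>t. ?k t * g3 R (s+R*t))"
    using i[OF c1] i[OF c2] i[OF c3] by (simp add: integral_add integral_diff integrable_diff)
  finally have C: "integral {-1..1} (\<lambda>t. ?k t * (g1 R (s+R*t) - g2 R (s+R*t) + g3 R (s+R*t))) = integral {-1..1} (\<lambda>t. ?k t * g1 R (s+R*t)) - integral {-1..1} (\<lambda>t. ?k t * g2 R (s+R*t))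
       + integral {-1..1} (\<lambda>t. ?k t * g3 R (s+R*t))" .
  show ?thesis unfolding Ag_def C by (simp add: algebra_simps)
qed

lemma Bg_lin:
  assumes c1: "continuous_on UNIV (\<lambda>(x,y). g1 x y)" and c2: "continuous_on UNIV (\<lambda>(x,y). g2 x y)"
    and c3: "continuous_on UNIV (\<lambda>(x,y). g3 x y)"
  shows "Bg s (\<lambda>R u. g1 R u - g2 R u + g3 R u) R = Bg s g1 R - Bg s g2 R + Bg s g3 R"
proof -
  let ?k = "\<lambda>t. f_ser (R^2*(t^2-1))/2 + 2*R*f1 (R^2*(t^2-1))"
  have i: "(\<lambda>t. ?k t * gi R (s+R*t)) integrable_on {-1..1}" if "continuous_on UNIV (\<lambda>(x,y). gi x y)" for gi
    by (intro integrable_continuous_real continuous_intros cont2[OF that]) auto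
  have C: "integral {-1..1} (\<lambda>t. ?k t * (g1 R (s+R*t) - g2 R (s+R*t) + g3 R (s+R*t)))
      = integral {-1..1} (\<lambda>t. ?k t * g1 R (s+R*t) - ?k t * g2 R (s+R*t) + ?k t * g3 R (s+R*t))"
    by (simp only: distrib_left right_diff_distrib)
  also have "\<dots> = integral {-1..1} (\<lambda>t. ?k t * g1 R (s+R*t)) - integral {-1..1} (\<lambda>t. ?k t * g2 R (s+R*t))
       + integral {-1..1} (\<lambda>t. ?k t * g3 R (s+R*t))"
    using i[OF c1] i[OF c2] i[OF c3] by (simp add: integral_add integral_diff integrable_diff)
  finally have C: "integral {-1..1} (\<lambda>t. ?k t * (g1 R (s+R*t) - g2 R (s+R*t) + g3 R (s+R*t))) = integral {-1..1} (\<lambda>t. ?k t * g1 R (s+R*t)) - integral {-1..1} (\<lambda>t. ?k t * g2 R (s+R*t))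
       + integral {-1..1} (\<lambda>t. ?k t * g3 R (s+R*t))" .
  show ?thesis unfolding Bg_def apply (subst C) apply (simp add: algebra_simps) done
qed

lemma Ag_zero: "(\<And>u. g R u = 0) \<Longrightarrow> Ag s g R = 0" by (simp add: Ag_def)
lemma Bg_zero: "(\<And>u. g R u = 0) \<Longrightarrow> Bg s g R = 0" by (simp add: Bg_def)

lemma int_compact:
  fixes F :: "real \<Rightarrow> real"
  assumes c: "continuous_on UNIV F" and z: "\<And>R. M < \<bar>R\<bar> \<Longrightarrow> F R = 0"
  shows "(F has_integral integral {-M..M} F) UNIV"
proof -
  have "(F has_integral integral {-M..M} F) {-M..M}"
    by (intro integrable_integral integrable_continuous_real continuous_on_subset[OF c]) auto
  then have "((\<lambda>x. if x \<in> {-M..M} then F x else 0) has_integral integral {-M..M} F) UNIV"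
    by (simp only: has_integral_restrict_UNIV)
  moreover have "(\<lambda>x. if x \<in> {-M..M} then F x else 0) = F" using z by (force simp: fun_eq_iff abs_le_iff)
  ultimately show ?thesis by simp
qed

lemma ftc_compact:
  fixes H h :: "real \<Rightarrow> real"
  assumes d: "\<And>R. (H has_real_derivative h R) (at R)" and z: "\<And>R. M < \<bar>R\<bar> \<Longrightarrow> h R = 0"
    and H1: "H M = 0" and H2: "H (-M) = 0" and M: "M \<ge> 0"
  shows "(h has_integral 0) UNIV"
proof -
  have "(h has_integral (H M - H (-M))) {-M..M}"
    using M by (intro fundamental_theorem_of_calculus)
       (auto intro: has_field_derivative_at_within d simp: has_real_derivative_iff_has_vector_derivative[symmetric])
  then have "((\<lambda>x. if x \<in> {-M..M} then h x else 0) has_integral 0) UNIV"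
    using H1 H2 by (simp only: has_integral_restrict_UNIV) simp
  moreover have "(\<lambda>x. if x \<in> {-M..M} then h x else 0) = h" using z by (force simp: fun_eq_iff abs_le_iff)
  ultimately show ?thesis by simp
qed

lemma Lstar_eq: "Lstar \<psi> = (\<lambda>R u. pR (pR \<psi>) R u - pu (pu \<psi>) R u + pR \<psi> R u)"
  by (simp add: Lstar_def)

lemma item1_1D:
  assumes T: "test2 \<psi>"
  shows "((\<lambda>R. Ag s (Lstar \<psi>) R) has_integral 0) UNIV"
proof -
  obtain K where K0: "K > 0" and K: "\<And>g R u. g \<in> partials \<psi> \<Longrightarrow> K < \<bar>R\<bar> \<or> K < \<bar>u\<bar> \<Longrightarrow> g R u = 0"
    using test2_support[OF T] by blast
  have m: "\<psi> \<in> partials \<psi>" "pR \<psi> \<in> partials \<psi>" "pu \<psi> \<in> partials \<psi>" "pR (pR \<psi>) \<in> partials \<psi>" "pu (pu \<psi>) \<in> partials \<psi>"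
    by (auto intro: partials.intros)
  note gd = test2_good[OF T] and ct = test2_cont[OF T]
  define H where "H R = Ag s (pR \<psi>) R - Bg s \<psi> R" for R
  have dH: "(H has_real_derivative Ag s (Lstar \<psi>) R) (at R)" for R
  proof -
    have d1: "(H has_real_derivative (Ag s (pR (pR \<psi>)) R + Bg s (pR \<psi>) R + Ag s (pR \<psi>) R) - (Bg s (pR \<psi>) R + Ag s (pu (pu \<psi>)) R)) (at R)"
      unfolding H_def[abs_def] by (intro DERIV_diff D1 D2 gd m)
    moreover have "Ag s (Lstar \<psi>) R = Ag s (pR (pR \<psi>)) R - Ag s (pu (pu \<psi>)) R + Ag s (pR \<psi>) R"
      unfolding Lstar_eq by (intro Ag_lin ct m)
    then have e: "(Ag s (pR (pR \<psi>)) R + Bg s (pR \<psi>) R + Ag s (pR \<psi>) R) - (Bg s (pR \<psi>) R + Ag s (pu (pu \<psi>)) R) = Ag s (Lstar \<psi>) R"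
      by simp
    show ?thesis using d1 unfolding e .
  qed
  have zL: "Ag s (Lstar \<psi>) R = 0" if "K+1 < \<bar>R\<bar>" for R
  proof (rule Ag_zero)
    fix u
    have "K < \<bar>R\<bar>" using that by simp
    then show "Lstar \<psi> R u = 0" unfolding Lstar_eq using K[OF m(4)] K[OF m(5)] K[OF m(2)] by simp
  qed
  have zH: "H R = 0" if "K < \<bar>R\<bar>" for R
    unfolding H_def using Ag_zero[of "pR \<psi>" R s] Bg_zero[of \<psi> R s] K[OF m(1)] K[OF m(2)] that by auto
  show ?thesis
    by (rule ftc_compact[OF dH zL, of "K+1"]) (use zH K0 in auto)
qed

lemma Ag_cont: "good g \<Longrightarrow> continuous_on UNIV (Ag s g)"
  by (intro continuous_at_imp_continuous_on ballI DERIV_isCont[OF D1])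

lemma Ag_int:
  assumes T: "test2 \<psi>" and g: "g \<in> partials \<psi>"
  shows "((\<lambda>R. Ag s g R) has_integral integral UNIV (Ag s g)) UNIV"
proof -
  obtain K where K0: "K > 0" and K: "\<And>g R u. g \<in> partials \<psi> \<Longrightarrow> K < \<bar>R\<bar> \<or> K < \<bar>u\<bar> \<Longrightarrow> g R u = 0"
    using test2_support[OF T] by blast
  have "(Ag s g has_integral integral {-K..K} (Ag s g)) UNIV"
    by (rule int_compact[OF Ag_cont[OF test2_good[OF T g]]]) (use K g in \<open>auto intro: Ag_zero\<close>)
  then show ?thesis using integral_unique by (metis eta_contract_eq)
qed

lemma Bg_int:
  assumes T: "test2 \<psi>" and g: "g \<in> partials \<psi>"
  shows "((\<lambda>R. Bg s g R) has_integral (- integral UNIV (Ag s (pR g)) - integral UNIV (Ag s g))) UNIV"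
proof -
  obtain K where K0: "K > 0" and K: "\<And>g R u. g \<in> partials \<psi> \<Longrightarrow> K < \<bar>R\<bar> \<or> K < \<bar>u\<bar> \<Longrightarrow> g R u = 0"
    using test2_support[OF T] by blast
  have gR: "pR g \<in> partials \<psi>" using g by (auto intro: partials.intros)
  have z: "Ag s (pR g) R + Bg s g R + Ag s g R = 0" if "K + 1 < \<bar>R\<bar>" for R
  proof -
    have "K < \<bar>R\<bar>" using that by simp
    then show ?thesis using Ag_zero[of "pR g" R s] Bg_zero[of g R s] Ag_zero[of g R s] K[OF g] K[OF gR] by auto
  qed
  have "((\<lambda>R. Ag s (pR g) R + Bg s g R + Ag s g R) has_integral 0) UNIV"
    by (rule ftc_compact[OF D1[OF test2_good[OF T g]] z, of "K+1"])
       (use K g K0 in \<open>auto intro!: Ag_zero\<close>)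
  from has_integral_diff[OF has_integral_diff[OF this Ag_int[OF T gR, where s=s]] Ag_int[OF T g, where s=s]]
  show ?thesis by simp
qed

lemma item2_1D:
  assumes T: "test2 \<psi>"
  shows "((\<lambda>R. Bg s (Lstar \<psi>) R) has_integral 0) UNIV"
proof -
  define c where "c g = integral UNIV (Ag s g)" for g
  have m: "\<psi> \<in> partials \<psi>" "pR \<psi> \<in> partials \<psi>" "pu \<psi> \<in> partials \<psi>" "pR (pR \<psi>) \<in> partials \<psi>"
    "pu (pu \<psi>) \<in> partials \<psi>" "pR (pR (pR \<psi>)) \<in> partials \<psi>" "pR (pu (pu \<psi>)) \<in> partials \<psi>"
    "pu (pu (pR \<psi>)) \<in> partials \<psi>"
    by (auto intro: partials.intros)
  note ct = test2_cont[OF T]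
  have sw: "pu (pu (pR \<psi>)) = pR (pu (pu \<psi>))"
    using test2_schwarz[OF T m(1)] test2_schwarz[OF T m(3)] by simp
  have c1: "c (pR (pR \<psi>)) - c (pu (pu \<psi>)) + c (pR \<psi>) = 0"
  proof -
    have "((\<lambda>R. Ag s (pR (pR \<psi>)) R - Ag s (pu (pu \<psi>)) R + Ag s (pR \<psi>) R) has_integral
        c (pR (pR \<psi>)) - c (pu (pu \<psi>)) + c (pR \<psi>)) UNIV"
      unfolding c_def by (intro has_integral_add has_integral_diff Ag_int[OF T] m)
    moreover have "(\<lambda>R. Ag s (pR (pR \<psi>)) R - Ag s (pu (pu \<psi>)) R + Ag s (pR \<psi>) R) = (\<lambda>R. Ag s (Lstar \<psi>) R)"
      unfolding Lstar_eq by (intro ext Ag_lin[symmetric] ct m)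
    ultimately show ?thesis using has_integral_unique item1_1D[OF T] by metis
  qed
  have T': "test2 (pR \<psi>)" by (rule test2_pR[OF T])
  have c2: "c (pR (pR (pR \<psi>))) - c (pR (pu (pu \<psi>))) + c (pR (pR \<psi>)) = 0"
  proof -
    have "((\<lambda>R. Ag s (pR (pR (pR \<psi>))) R - Ag s (pu (pu (pR \<psi>))) R + Ag s (pR (pR \<psi>)) R) has_integral
        c (pR (pR (pR \<psi>))) - c (pu (pu (pR \<psi>))) + c (pR (pR \<psi>))) UNIV"
      unfolding c_def by (intro has_integral_add has_integral_diff Ag_int[OF T] m)
    moreover have "(\<lambda>R. Ag s (pR (pR (pR \<psi>))) R - Ag s (pu (pu (pR \<psi>))) R + Ag s (pR (pR \<psi>)) R) = (\<lambda>R. Ag s (Lstar (pR \<psi>)) R)"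
      unfolding Lstar_eq by (intro ext Ag_lin[symmetric] ct m)
    ultimately show ?thesis using has_integral_unique item1_1D[OF T'] sw by metis
  qed
  have "((\<lambda>R. Bg s (pR (pR \<psi>)) R - Bg s (pu (pu \<psi>)) R + Bg s (pR \<psi>) R) has_integral
      (- c (pR (pR (pR \<psi>))) - c (pR (pR \<psi>))) - (- c (pR (pu (pu \<psi>))) - c (pu (pu \<psi>))) + (- c (pR (pR \<psi>)) - c (pR \<psi>))) UNIV"
    unfolding c_def by (intro has_integral_add has_integral_diff Bg_int[OF T] m)
  moreover have "(\<lambda>R. Bg s (pR (pR \<psi>)) R - Bg s (pu (pu \<psi>)) R + Bg s (pR \<psi>) R) = (\<lambda>R. Bg s (Lstar \<psi>) R)"
    unfolding Lstar_eq by (intro ext Bg_lin[symmetric] ct m)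
  moreover have "(- c (pR (pR (pR \<psi>))) - c (pR (pR \<psi>))) - (- c (pR (pu (pu \<psi>))) - c (pu (pu \<psi>))) + (- c (pR (pR \<psi>)) - c (pR \<psi>)) = 0"
    using c1 c2 by linarith
  ultimately show ?thesis by simp
qed

lemma test1_D:
  assumes "test1 \<phi>"
  shows "\<phi> differentiable (at x)" "deriv \<phi> differentiable (at x)" "deriv (deriv \<phi>) differentiable (at x)"
    "deriv (deriv (deriv \<phi>)) differentiable (at x)"
proof -
  have d: "((deriv ^^ n) \<phi>) differentiable (at x)" for n using assms unfolding test1_def by blast
  show "\<phi> differentiable (at x)" using d[of 0] by simp
  show "deriv \<phi> differentiable (at x)" using d[of 1] by simp
  show "deriv (deriv \<phi>) differentiable (at x)" using d[of 2] by (simp add: numeral_2_eq_2)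
  show "deriv (deriv (deriv \<phi>)) differentiable (at x)" using d[of 3] by (simp add: numeral_3_eq_3)
qed

lemma diff_cont: "(\<And>x. h differentiable (at x)) \<Longrightarrow> continuous_on UNIV (h :: real \<Rightarrow> real)"
  by (intro continuous_at_imp_continuous_on ballI differentiable_imp_continuous_within) auto

lemma pR_const: "pR (\<lambda>_. h) = (\<lambda>_ _. 0)" by (simp add: pR_def fun_eq_iff)
lemma pu_const: "pu (\<lambda>_. h) = (\<lambda>_. deriv h)" by (simp add: pu_def fun_eq_iff)

lemma good_const:
  assumes "\<And>x. h differentiable (at x)" "\<And>x. deriv h differentiable (at x)"
  shows "good (\<lambda>_. h)"
proof -
  have c: "continuous_on UNIV h" "continuous_on UNIV (deriv h)" using assms by (auto intro: diff_cont)
  have c1: "continuous_on UNIV (\<lambda>(x::real,y). h y)" by (rule split_cont) (auto intro!: continuous_intros continuous_on_compose2[OF c(1)])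
  have c2: "continuous_on UNIV (\<lambda>(x::real,y). deriv h y)" by (rule split_cont) (auto intro!: continuous_intros continuous_on_compose2[OF c(2)])
  show ?thesis unfolding good_def pR_const pu_const using assms c1 c2 by (auto simp: split_beta)
qed

lemma isCont_tendsto0: "continuous_on UNIV F \<Longrightarrow> F 0 = L \<Longrightarrow> (F \<longlongrightarrow> L) (at (0::real))"
  using continuous_on_eq_continuous_at[of UNIV F] isCont_def by fastforce

lemma Bg_cont: "good g \<Longrightarrow> good (pu g) \<Longrightarrow> continuous_on UNIV (Bg s g)"
  by (intro continuous_at_imp_continuous_on ballI DERIV_isCont[OF D2])

lemma items_test1:
  assumes T: "test1 \<phi>"
  shows "((\<lambda>R. sharp_pair s R \<phi>) \<longlongrightarrow> 0) (at 0)"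
      "((\<lambda>R. deriv (\<lambda>r. sharp_pair s r \<phi>) R) \<longlongrightarrow> \<phi> s) (at 0)"
      "((\<lambda>R. flat_pair s R \<phi>) \<longlongrightarrow> \<phi> s) (at 0)"
      "((\<lambda>R. deriv (\<lambda>r. flat_pair s r \<phi>) R) \<longlongrightarrow> 0) (at 0)"
      "\<forall>R. ((\<lambda>r. sharp_pair s r \<phi>) has_real_derivative (flat_pair s R \<phi> + sharp_pair s R \<phi>)) (at R)"
proof -
  note d = test1_D[OF T]
  have cphi: "continuous_on UNIV \<phi>" by (rule diff_cont[OF d(1)])
  define g where "g = (\<lambda>_::real. \<phi>)"
  have g: "good g" unfolding g_def by (rule good_const[OF d(1) d(2)])
  have gu: "good (pu g)" unfolding g_def pu_const by (rule good_const[OF d(2) d(3)])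
  have guu: "good (pu (pu g))" unfolding g_def pu_const by (rule good_const[OF d(3) d(4)])
  have sh: "(\<lambda>r. sharp_pair s r \<phi>) = Ag s g" unfolding g_def using sharp_t[OF cphi] by (simp add: fun_eq_iff)
  have fl: "(\<lambda>r. flat_pair s r \<phi>) = Bg s g" unfolding g_def using flat_t[OF cphi] by (simp add: fun_eq_iff)
  have A0: "Ag s (pR g) R = 0" for R unfolding g_def pR_const by (rule Ag_zero) simp
  have B0: "Bg s (pR g) R = 0" for R unfolding g_def pR_const by (rule Bg_zero) simp
  have dsh: "((\<lambda>r. sharp_pair s r \<phi>) has_real_derivative (flat_pair s R \<phi> + sharp_pair s R \<phi>)) (at R)" for R
    using D1[OF g, of s R] unfolding A0 sh fl[symmetric]
    by (metis add_0 fl sh)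
  then show "\<forall>R. ((\<lambda>r. sharp_pair s r \<phi>) has_real_derivative (flat_pair s R \<phi> + sharp_pair s R \<phi>)) (at R)" by blast
  have Ag0: "Ag s g 0 = 0" by (simp add: Ag_def)
  have Bg0: "Bg s g 0 = \<phi> s" by (simp add: Bg_def g_def)
  show "((\<lambda>R. sharp_pair s R \<phi>) \<longlongrightarrow> 0) (at 0)"
    unfolding sh by (rule isCont_tendsto0[OF Ag_cont[OF g] Ag0])
  show "((\<lambda>R. flat_pair s R \<phi>) \<longlongrightarrow> \<phi> s) (at 0)"
    unfolding fl by (rule isCont_tendsto0[OF Bg_cont[OF g gu] Bg0])
  have "(\<lambda>R. deriv (\<lambda>r. sharp_pair s r \<phi>) R) = (\<lambda>R. Bg s g R + Ag s g R)"
    using dsh DERIV_imp_deriv fl sh by (metis (no_types, lifting))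
  moreover have "((\<lambda>R. Bg s g R + Ag s g R) \<longlongrightarrow> \<phi> s) (at 0)"
    using tendsto_add[OF isCont_tendsto0[OF Bg_cont[OF g gu] Bg0] isCont_tendsto0[OF Ag_cont[OF g] Ag0]] by simp
  ultimately show "((\<lambda>R. deriv (\<lambda>r. sharp_pair s r \<phi>) R) \<longlongrightarrow> \<phi> s) (at 0)" by simp
  have "(\<lambda>R. deriv (\<lambda>r. flat_pair s r \<phi>) R) = (\<lambda>R. Ag s (pu (pu g)) R)"
  proof
    fix R
    have "(Bg s g has_real_derivative Ag s (pu (pu g)) R) (at R)" using D2[OF g gu, of s R] B0 by simp
    then show "deriv (\<lambda>r. flat_pair s r \<phi>) R = Ag s (pu (pu g)) R" unfolding fl by (rule DERIV_imp_deriv)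
  qed
  moreover have z: "Ag s (pu (pu g)) 0 = 0" by (simp add: Ag_def)
  ultimately show "((\<lambda>R. deriv (\<lambda>r. flat_pair s r \<phi>) R) \<longlongrightarrow> 0) (at 0)"
    using isCont_tendsto0[OF Ag_cont[OF guu, where s=s] z] by simp
qed

lemma int_bound:
  fixes h :: "real \<Rightarrow> real"
  assumes hI: "(h has_integral I) UNIV" and b: "\<And>u. \<bar>h u\<bar> \<le> (if u \<in> {-K..K} then C else 0)" and K: "K \<ge> 0"
  shows "\<bar>I\<bar> \<le> C * (2*K)"
proof -
  have "((\<lambda>x. C) has_integral C * (2*K)) {-K..K}" using has_integral_const_real[of C "-K" K] K by (simp add: algebra_simps)
  then have G: "((\<lambda>u. if u \<in> {-K..K} then C else 0) has_integral C * (2*K)) UNIV"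
    by (simp only: has_integral_restrict_UNIV)
  have "I \<le> C * (2*K)" by (rule has_integral_le[OF hI G]) (use b in \<open>smt (verit)\<close>)
  moreover have "-I \<le> C * (2*K)" by (rule has_integral_le[OF has_integral_neg[OF hI] G]) (use b in \<open>smt (verit)\<close>)
  ultimately show ?thesis by linarith
qed

lemma half_at_top: "filterlim (\<lambda>x::real. x/2) at_top at_top"
proof -
  have "filterlim (\<lambda>x::real. (1/2) * x) at_top at_top"
    by (rule filterlim_tendsto_pos_mult_at_top[OF tendsto_const _ filterlim_ident]) simp
  then show ?thesis by simp
qed

lemma lim_bot0: "((\<lambda>R. exp (R/2) * f_ser (-(R^2))) \<longlongrightarrow> 0) at_bot"
proof -
  have "((\<lambda>x. exp (-(x/2)) * f_ser (-4*(x/2)^2)) \<longlongrightarrow> 0) at_top"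
    using filterlim_compose[OF lim_f0 half_at_top] by (simp add: o_def)
  moreover have "(\<lambda>x. exp (-(x/2)) * f_ser (-4*(x/2)^2)) = (\<lambda>x. exp ((-x)/2) * f_ser (-((-x)^2)))"
    by (simp add: fun_eq_iff power_divide)
  ultimately show ?thesis unfolding filterlim_at_bot_mirror by simp
qed

lemma lim_bot1: "((\<lambda>R. exp (R/2) * (\<bar>R\<bar> * \<bar>f1 (-(R^2))\<bar>)) \<longlongrightarrow> 0) at_bot"
proof -
  have "((\<lambda>x. 2 * (exp (-(x/2)) * ((x/2) * \<bar>f1 (-4*(x/2)^2)\<bar>))) \<longlongrightarrow> 2 * 0) at_top"
    using tendsto_mult_left[OF filterlim_compose[OF lim_f1 half_at_top], of 2] by (simp add: o_def)
  then have "((\<lambda>x. 2 * (exp (-(x/2)) * ((x/2) * \<bar>f1 (-4*(x/2)^2)\<bar>))) \<longlongrightarrow> 0) at_top" by simp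
  then have "((\<lambda>x. exp ((-x)/2) * (\<bar>-x\<bar> * \<bar>f1 (-((-x)^2))\<bar>)) \<longlongrightarrow> 0) at_top"
  proof (rule Lim_transform_eventually)
    show "\<forall>\<^sub>F x in at_top. 2 * (exp (-(x/2)) * ((x/2) * \<bar>f1 (-4*(x/2)^2)\<bar>)) = exp ((-x)/2) * (\<bar>-x\<bar> * \<bar>f1 (-((-x)^2))\<bar>)"
      using eventually_ge_at_top[of "0::real"] by eventually_elim (simp add: power_divide)
  qed
  then show ?thesis unfolding filterlim_at_bot_mirror by simp
qed

lemma test1_bound:
  assumes T: "test1 \<phi>"
  obtains K M where "K > 0" "M \<ge> 0" "\<And>u. K < \<bar>u\<bar> \<Longrightarrow> \<phi> u = 0" "\<And>u. \<bar>\<phi> u\<bar> \<le> M"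
proof -
  obtain K0 where K0: "\<And>x. K0 < \<bar>x\<bar> \<Longrightarrow> \<phi> x = 0" using T unfolding test1_def by blast
  define K where "K = \<bar>K0\<bar> + 1"
  have K: "\<And>u. K < \<bar>u\<bar> \<Longrightarrow> \<phi> u = 0" using K0 unfolding K_def by force
  have c: "continuous_on {-K..K} \<phi>" using diff_cont[OF test1_D(1)[OF T]] continuous_on_subset by blast
  obtain M where M: "M \<ge> 0" "\<And>x. x \<in> {-K..K} \<Longrightarrow> norm (\<phi> x) \<le> M"
    using continuous_on_compact_bound[OF compact_Icc c] by blast
  have "\<bar>\<phi> u\<bar> \<le> M" for u
  proof (cases "K < \<bar>u\<bar>")
    case True then show ?thesis using K M by simp
  next
    case False
    then have "u \<in> {-K..K}" by auto
    then show ?thesis using M(2)[of u] by simp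
  qed
  moreover have "K > 0" unfolding K_def by simp
  ultimately show ?thesis using that K M by blast
qed

lemma f0_bound:
  assumes "\<bar>v\<bar> < \<bar>R\<bar>"
  shows "0 \<le> f_ser (v^2 - R^2)" "f_ser (v^2 - R^2) \<le> f_ser (-(R^2))" "\<bar>f1 (v^2 - R^2)\<bar> \<le> \<bar>f1 (-(R^2))\<bar>"
proof -
  have "\<bar>v\<bar>^2 < \<bar>R\<bar>^2" by (rule power_strict_mono) (use assms in auto)
  then have "v^2 < R^2" by simp
  then have a: "-(R^2) \<le> v^2 - R^2" "v^2 - R^2 \<le> 0" by auto
  show "0 \<le> f_ser (v^2 - R^2)" "f_ser (v^2 - R^2) \<le> f_ser (-(R^2))" using f0_mono[OF a] by auto
  show "\<bar>f1 (v^2 - R^2)\<bar> \<le> \<bar>f1 (-(R^2))\<bar>" using f1_mono[OF a] by auto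
qed

lemma sharp_bot:
  assumes T: "test1 \<phi>"
  shows "((\<lambda>R. sharp_pair s R \<phi>) \<longlongrightarrow> 0) at_bot"
proof -
  obtain K M where K0: "K > 0" and M0: "M \<ge> 0" and K: "\<And>u. K < \<bar>u\<bar> \<Longrightarrow> \<phi> u = 0" and M: "\<And>u. \<bar>\<phi> u\<bar> \<le> M"
    using test1_bound[OF T] by blast
  have cphi: "continuous_on UNIV \<phi>" by (rule diff_cont[OF test1_D(1)[OF T]])
  have bnd: "\<bar>sharp_pair s R \<phi>\<bar> \<le> (M*K) * (exp (R/2) * f_ser (-(R^2)))" if R: "R < 0" for R
  proof -
    define c where "c = 1/2 * sgn R * exp (R/2)"
    define hh where "hh u = c * (f_ser ((u-s)^2 - R^2) * \<phi> u)" for u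
    have hc: "continuous_on UNIV hh" unfolding hh_def by (intro continuous_intros cphi)
    have eq: "(\<lambda>u. chi_sharp R (u - s) * \<phi> u) = (\<lambda>u. if \<bar>u - s\<bar> < \<bar>R\<bar> then hh u else 0)"
      by (auto simp: chi_sharp_def hh_def c_def fun_eq_iff)
    have hI: "((\<lambda>u. chi_sharp R (u - s) * \<phi> u) has_integral sharp_pair s R \<phi>) UNIV"
    proof -
      have R0: "R \<noteq> 0" using R by simp
      have HI: "((\<lambda>u. if \<bar>u - s\<bar> < \<bar>R\<bar> then hh u else 0) has_integral (\<bar>R\<bar> * integral {-1..1} (\<lambda>t. hh (s + R*t)))) UNIV"
        by (rule sub_int[OF hc R0])
      show ?thesis unfolding sharp_pair_def eq by (rule integrable_integral[OF has_integral_integrable[OF HI]])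
    qed
    have pb: "\<bar>chi_sharp R (u - s) * \<phi> u\<bar> \<le> (if u \<in> {-K..K} then 1/2 * exp (R/2) * f_ser (-(R^2)) * M else 0)" for u
    proof (cases "u \<in> {-K..K}")
      case False
      then have "\<phi> u = 0" using K by (auto simp: abs_le_iff)
      then show ?thesis using False by auto
    next
      case True
      have f00: "0 \<le> f_ser (-(R^2))" using f0_mono[of "-(R^2)" "-(R^2)"] by simp
      have "\<bar>chi_sharp R (u - s)\<bar> \<le> 1/2 * exp (R/2) * f_ser (-(R^2))"
      proof (cases "\<bar>u - s\<bar> < \<bar>R\<bar>")
        case True
        then have "\<bar>chi_sharp R (u - s)\<bar> = 1/2 * exp (R/2) * f_ser ((u-s)^2 - R^2)"
          using f0_bound(1)[OF True] R by (simp add: chi_sharp_def abs_mult)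
        then show ?thesis using f0_bound(2)[OF True] by simp
      next
        case False then show ?thesis using f00 by (simp add: chi_sharp_def)
      qed
      then have "\<bar>chi_sharp R (u - s)\<bar> * \<bar>\<phi> u\<bar> \<le> 1/2 * exp (R/2) * f_ser (-(R^2)) * M"
        using M[of u] f00 by (intro mult_mono) auto
      then show ?thesis using True by (simp add: abs_mult)
    qed
    have "\<bar>sharp_pair s R \<phi>\<bar> \<le> 1/2 * exp (R/2) * f_ser (-(R^2)) * M * (2*K)"
      by (rule int_bound[OF hI pb]) (use K0 in simp)
    then show ?thesis by (simp add: algebra_simps)
  qed
  show ?thesis
  proof (rule Lim_null_comparison)
    show "\<forall>\<^sub>F R in at_bot. norm (sharp_pair s R \<phi>) \<le> (M*K) * (exp (R/2) * f_ser (-(R^2)))"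
      using bnd by (intro eventually_at_bot_linorderI[of "-1"]) auto
    show "((\<lambda>R. (M*K) * (exp (R/2) * f_ser (-(R^2)))) \<longlongrightarrow> 0) at_bot"
      using tendsto_mult[OF tendsto_const lim_bot0, of "M*K"] by simp
  qed
qed

lemma flat_bot:
  assumes T: "test1 \<phi>"
  shows "((\<lambda>R. flat_pair s R \<phi>) \<longlongrightarrow> 0) at_bot"
proof -
  obtain K M where K0: "K > 0" and M0: "M \<ge> 0" and K: "\<And>u. K < \<bar>u\<bar> \<Longrightarrow> \<phi> u = 0" and M: "\<And>u. \<bar>\<phi> u\<bar> \<le> M"
    using test1_bound[OF T] by blast
  have cphi: "continuous_on UNIV \<phi>" by (rule diff_cont[OF test1_D(1)[OF T]])
  have bnd: "\<bar>flat_pair s R \<phi>\<bar> \<le> (M*K) * (1/2 * (exp (R/2) * f_ser (-(R^2))) + 2 * (exp (R/2) * (\<bar>R\<bar> * \<bar>f1 (-(R^2))\<bar>)))"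
    if R: "R < - (K + \<bar>s\<bar>)" for R
  proof -
    have R0: "R < 0" "R \<noteq> 0" using R K0 by auto
    have p1: "\<phi> (s + R) = 0" using R by (intro K) auto
    have p2: "\<phi> (s - R) = 0" using R by (intro K) auto
    define hh where "hh u = ((1/2) * f_ser ((u - s)^2 - R^2) + 2 * R * f1 ((u - s)^2 - R^2)) * \<phi> u" for u
    have hc: "continuous_on UNIV hh" unfolding hh_def by (intro continuous_intros cphi)
    define I where "I = integral UNIV (\<lambda>u. if \<bar>u - s\<bar> < \<bar>R\<bar> then hh u else 0)"
    have fl: "flat_pair s R \<phi> = - (1/2) * sgn R * exp (R/2) * I"
      unfolding flat_pair_def I_def hh_def deriv_f_ser p1 p2 by simp
    have hI: "((\<lambda>u. if \<bar>u - s\<bar> < \<bar>R\<bar> then hh u else 0) has_integral I) UNIV"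
    proof -
      have HI: "((\<lambda>u. if \<bar>u - s\<bar> < \<bar>R\<bar> then hh u else 0) has_integral (\<bar>R\<bar> * integral {-1..1} (\<lambda>t. hh (s + R*t)))) UNIV"
        by (rule sub_int[OF hc R0(2)])
      show ?thesis unfolding I_def by (rule integrable_integral[OF has_integral_integrable[OF HI]])
    qed
    define C where "C = (1/2 * f_ser (-(R^2)) + 2 * \<bar>R\<bar> * \<bar>f1 (-(R^2))\<bar>) * M"
    have pb: "\<bar>if \<bar>u - s\<bar> < \<bar>R\<bar> then hh u else 0\<bar> \<le> (if u \<in> {-K..K} then C else 0)" for u
    proof (cases "u \<in> {-K..K}")
      case False
      then have "\<phi> u = 0" using K by (auto simp: abs_le_iff)
      then show ?thesis using False by (auto simp: hh_def)
    next
      case True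
      have f00: "0 \<le> f_ser (-(R^2))" using f0_mono[of "-(R^2)" "-(R^2)"] by simp
      have C0: "0 \<le> C" unfolding C_def using f00 M0 by simp
      show ?thesis
      proof (cases "\<bar>u - s\<bar> < \<bar>R\<bar>")
        case False then show ?thesis using True C0 by simp
      next
        case lt: True
        have "\<bar>(1/2) * f_ser ((u - s)^2 - R^2) + 2 * R * f1 ((u - s)^2 - R^2)\<bar>
            \<le> 1/2 * f_ser (-(R^2)) + 2 * \<bar>R\<bar> * \<bar>f1 (-(R^2))\<bar>"
        proof -
          have "\<bar>(1/2) * f_ser ((u - s)^2 - R^2) + 2 * R * f1 ((u - s)^2 - R^2)\<bar>
              \<le> (1/2) * \<bar>f_ser ((u - s)^2 - R^2)\<bar> + 2 * \<bar>R\<bar> * \<bar>f1 ((u - s)^2 - R^2)\<bar>"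
            by (rule order_trans[OF abs_triangle_ineq]) (simp add: abs_mult)
          also have "\<dots> \<le> 1/2 * f_ser (-(R^2)) + 2 * \<bar>R\<bar> * \<bar>f1 (-(R^2))\<bar>"
            using f0_bound[OF lt] by (intro add_mono mult_left_mono) auto
          finally show ?thesis .
        qed
        then have "\<bar>hh u\<bar> \<le> C" unfolding hh_def C_def abs_mult using M[of u]
          by (intro mult_mono) auto
        then show ?thesis using True lt by simp
      qed
    qed
    have "\<bar>I\<bar> \<le> C * (2*K)" by (rule int_bound[OF hI pb]) (use K0 in simp)
    then have "\<bar>flat_pair s R \<phi>\<bar> \<le> 1/2 * exp (R/2) * (C * (2*K))"
      unfolding fl using R0 by (simp add: abs_mult)
    then show ?thesis unfolding C_def by (simp add: algebra_simps)
  qed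
  show ?thesis
  proof (rule Lim_null_comparison)
    show "\<forall>\<^sub>F R in at_bot. norm (flat_pair s R \<phi>) \<le> (M*K) * (1/2 * (exp (R/2) * f_ser (-(R^2))) + 2 * (exp (R/2) * (\<bar>R\<bar> * \<bar>f1 (-(R^2))\<bar>)))"
      using bnd by (intro eventually_at_bot_linorderI[of "-(K + \<bar>s\<bar>) - 1"]) auto
    show "((\<lambda>R. (M*K) * (1/2 * (exp (R/2) * f_ser (-(R^2))) + 2 * (exp (R/2) * (\<bar>R\<bar> * \<bar>f1 (-(R^2))\<bar>)))) \<longlongrightarrow> 0) at_bot"
      using tendsto_mult[OF tendsto_const tendsto_add[OF tendsto_mult[OF tendsto_const lim_bot0] tendsto_mult[OF tendsto_const lim_bot1]], of "M*K" "1/2" 2]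
      by simp
  qed
qed

lemma chi_bound: "\<bar>chi_sharp R v\<bar> \<le> 1/2 * exp (R/2) * f_ser (-(R^2))"
proof (cases "\<bar>v\<bar> < \<bar>R\<bar>")
  case True
  then have R: "R \<noteq> 0" by auto
  have "\<bar>chi_sharp R v\<bar> = 1/2 * exp (R/2) * f_ser (v^2 - R^2)"
    using f0_bound(1)[OF True] R True by (simp add: chi_sharp_def abs_mult)
  then show ?thesis using f0_bound(2)[OF True] by simp
next
  case False
  have f00: "0 \<le> f_ser (-(R^2))" using f0_mono[of "-(R^2)" "-(R^2)"] by simp
  then show ?thesis using False by (simp add: chi_sharp_def)
qed

lemma Lstar_cont:
  assumes T: "test2 \<psi>"
  shows "continuous_on UNIV (\<lambda>p. Lstar \<psi> (fst p) (snd p))"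
proof -
  have m: "pR (pR \<psi>) \<in> partials \<psi>" "pu (pu \<psi>) \<in> partials \<psi>" "pR \<psi> \<in> partials \<psi>" by (auto intro: partials.intros)
  note c = test2_cont[OF T]
  show ?thesis unfolding Lstar_eq
    by (intro continuous_intros cont2[OF c[OF m(1)]] cont2[OF c[OF m(2)]] cont2[OF c[OF m(3)]])
qed

lemma f_ser_meas [measurable]: "f_ser \<in> borel_measurable borel"
  by (rule borel_measurable_continuous_onI[OF cont_f0])

lemma item1_2D:
  assumes T: "test2 \<psi>"
  shows "((\<lambda>(R, u). chi_sharp R (u - s) * Lstar \<psi> R u) has_integral 0) (UNIV :: (real \<times> real) set)"
proof -
  define F where "F p = chi_sharp (fst p) (snd p - s) * Lstar \<psi> (fst p) (snd p)" for p :: "real \<times> real"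
  have Fe: "(\<lambda>(R, u). chi_sharp R (u - s) * Lstar \<psi> R u) = F" by (simp add: F_def fun_eq_iff)
  obtain K where K0: "K > 0" and K: "\<And>g R u. g \<in> partials \<psi> \<Longrightarrow> K < \<bar>R\<bar> \<or> K < \<bar>u\<bar> \<Longrightarrow> g R u = 0"
    using test2_support[OF T] by blast
  have m: "pR (pR \<psi>) \<in> partials \<psi>" "pu (pu \<psi>) \<in> partials \<psi>" "pR \<psi> \<in> partials \<psi>" by (auto intro: partials.intros)
  have Lz: "Lstar \<psi> R u = 0" if "K < \<bar>R\<bar> \<or> K < \<bar>u\<bar>" for R u
    unfolding Lstar_eq using K[OF m(1) that] K[OF m(2) that] K[OF m(3) that] by simp
  have LC: "continuous_on UNIV (\<lambda>p. Lstar \<psi> (fst p) (snd p))" by (rule Lstar_cont[OF T])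
  obtain M where M0: "M \<ge> 0" and M: "\<And>p. p \<in> cbox (-K,-K) (K,K) \<Longrightarrow> norm (Lstar \<psi> (fst p) (snd p)) \<le> M"
    using continuous_on_compact_bound[OF compact_cbox continuous_on_subset[OF LC]] by blast
  define C where "C = 1/2 * exp (K/2) * f_ser (-(K^2)) * M"
  have Lmeas [measurable]: "(\<lambda>p. Lstar \<psi> (fst p) (snd p)) \<in> borel_measurable (borel \<Otimes>\<^sub>M borel)"
    unfolding borel_prod by (rule borel_measurable_continuous_onI[OF LC])
  have Fmeas': "F \<in> borel_measurable (borel \<Otimes>\<^sub>M borel)"
    unfolding F_def chi_sharp_def by measurable
  then have Fmeas: "F \<in> borel_measurable borel" unfolding borel_prod .
  have Fb: "\<bar>F (R, u)\<bar> \<le> C * indicator (cbox (-K,-K) (K,K)) (R, u)" for R u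
  proof (cases "(R, u) \<in> cbox (-K,-K) (K,K)")
    case False
    then have "K < \<bar>R\<bar> \<or> K < \<bar>u\<bar>" by (auto simp: cbox_Pair_eq abs_le_iff)
    then show ?thesis using Lz False by (simp add: F_def)
  next
    case True
    then have RK: "\<bar>R\<bar> \<le> K" "\<bar>u\<bar> \<le> K" by (auto simp: cbox_Pair_eq abs_le_iff)
    have "R^2 \<le> K^2" using RK by (simp add: abs_le_square_iff[symmetric])
    then have f1: "f_ser (-(R^2)) \<le> f_ser (-(K^2))" "0 \<le> f_ser (-(R^2))" using f0_mono[of "-(K^2)" "-(R^2)"] by auto
    have e1: "exp (R/2) \<le> exp (K/2)" using RK by simp
    have "\<bar>chi_sharp R (u - s)\<bar> \<le> 1/2 * exp (K/2) * f_ser (-(K^2))"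
      using chi_bound[of R "u - s"] mult_mono[OF e1 f1(1)] f1(2) by simp
    moreover have "\<bar>Lstar \<psi> R u\<bar> \<le> M" using M[OF True] by simp
    ultimately have "\<bar>chi_sharp R (u - s)\<bar> * \<bar>Lstar \<psi> R u\<bar> \<le> (1/2 * exp (K/2) * f_ser (-(K^2))) * M"
      by (intro mult_mono) (auto intro: order_trans[OF abs_ge_zero])
    then have "\<bar>F (R, u)\<bar> \<le> C" unfolding F_def C_def abs_mult by simp
    then show ?thesis using True by simp
  qed
  have Fint: "integrable lborel F"
  proof (rule Bochner_Integration.integrable_bound)
    show "integrable lborel (\<lambda>p. C * indicator (cbox (-K,-K) (K,K)) p :: real)"
      by (intro integrable_mult_right integrable_real_indicator emeasure_lborel_cbox_finite) auto
    show "F \<in> borel_measurable lborel" using Fmeas by simp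
    show "AE x in lborel. norm (F x) \<le> norm (C * indicator (cbox (-K,-K) (K,K)) x :: real)"
    proof (intro AE_I2)
      fix x :: "real \<times> real"
      obtain R u where x: "x = (R, u)" by (cases x)
      have "\<bar>F (R, u)\<bar> \<le> C * indicator (cbox (-K,-K) (K,K)) (R, u)" by (rule Fb)
      also have "\<dots> \<le> \<bar>C * indicator (cbox (-K,-K) (K,K)) (R, u)\<bar>" by (rule abs_ge_self)
      finally show "norm (F x) \<le> norm (C * indicator (cbox (-K,-K) (K,K)) x :: real)" using x by simp
    qed
  qed
  have Fint': "integrable (lborel \<Otimes>\<^sub>M lborel) F" using Fint by (simp add: lborel_prod)
  note Fmeas'[measurable]
  have inner: "(\<integral>u. F (R, u) \<partial>lborel) = Ag s (Lstar \<psi>) R" for R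
  proof -
    have mR: "(\<lambda>u. F (R, u)) \<in> borel_measurable borel" by measurable
    have iR: "integrable lborel (\<lambda>u. F (R, u))"
    proof (rule Bochner_Integration.integrable_bound)
      have fin: "emeasure lborel {-K..K} < \<infinity>" using emeasure_lborel_cbox_finite[of "-K" K] by (simp add: cbox_interval)
      show "integrable lborel (\<lambda>u. C * indicator {-K..K} u :: real)"
        by (rule integrable_mult_right, rule integrable_real_indicator[OF _ fin]) auto
      show "(\<lambda>u. F (R, u)) \<in> borel_measurable lborel" using mR by simp
      show "AE x in lborel. norm (F (R, x)) \<le> norm (C * indicator {-K..K} x :: real)"
      proof (intro AE_I2)
        fix u :: real
        have "\<bar>F (R, u)\<bar> \<le> C * indicator (cbox (-K,-K) (K,K)) (R, u)" by (rule Fb)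
        also have "\<dots> \<le> \<bar>C * indicator {-K..K} u\<bar>"
          by (auto simp: indicator_def cbox_Pair_eq C_def M0 f0_mono[of "-(K^2)" "-(K^2)"])
        finally show "norm (F (R, u)) \<le> norm (C * indicator {-K..K} u :: real)" by simp
      qed
    qed
    have cL: "continuous_on UNIV (\<lambda>u. Lstar \<psi> R u)"
    proof -
      have p: "continuous_on UNIV (\<lambda>u::real. (R, u))" by (intro continuous_intros)
      show ?thesis using continuous_on_compose2[OF LC p] by simp
    qed
    have "(\<integral>u. F (R, u) \<partial>lborel) = integral UNIV (\<lambda>u. F (R, u))" using integral_lborel[OF iR] by simp
    also have "\<dots> = sharp_pair s R (\<lambda>u. Lstar \<psi> R u)" by (simp add: sharp_pair_def F_def)
    also have "\<dots> = Ag s (\<lambda>_. \<lambda>u. Lstar \<psi> R u) R" by (rule sharp_t[OF cL])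
    also have "\<dots> = Ag s (Lstar \<psi>) R" by (simp add: Ag_def)
    finally show ?thesis .
  qed
  have "integrable lborel (\<lambda>R. \<integral>u. F (R, u) \<partial>lborel)" by (rule lborel_pair.integrable_fst'[OF Fint'])
  then have iA: "integrable lborel (\<lambda>R. Ag s (Lstar \<psi>) R)" unfolding inner .
  have "integral\<^sup>L lborel F = (\<integral>R. (\<integral>u. F (R, u) \<partial>lborel) \<partial>lborel)"
    using lborel_pair.integral_fst'[OF Fint'] by (simp add: lborel_prod)
  also have "\<dots> = (\<integral>R. Ag s (Lstar \<psi>) R \<partial>lborel)" unfolding inner ..
  also have "\<dots> = integral UNIV (\<lambda>R. Ag s (Lstar \<psi>) R)" using integral_lborel[OF iA] by simp
  also have "\<dots> = 0" using integral_unique[OF item1_1D[OF T]] .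
  finally have "integral\<^sup>L lborel F = 0" .
  then show ?thesis unfolding Fe using has_integral_integral_lborel[OF Fint] by simp
qed

lemma item2_final:
  assumes T: "test2 \<psi>"
  shows "((\<lambda>R. flat_pair s R (\<lambda>u. Lstar \<psi> R u)) has_integral 0) UNIV"
proof -
  have LC: "continuous_on UNIV (\<lambda>p. Lstar \<psi> (fst p) (snd p))" by (rule Lstar_cont[OF T])
  have "flat_pair s R (\<lambda>u. Lstar \<psi> R u) = Bg s (Lstar \<psi>) R" for R
  proof -
    have p: "continuous_on UNIV (\<lambda>u::real. (R, u))" by (intro continuous_intros)
    have cL: "continuous_on UNIV (\<lambda>u. Lstar \<psi> R u)" using continuous_on_compose2[OF LC p] by simp
    show ?thesis using flat_t[OF cL] by (simp add: Bg_def)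
  qed
  then show ?thesis using item2_1D[OF T] by simp
qed

theorem theorem2p2:
  fixes s :: real
  shows
    \<comment> \<open>chi-sharp solves the equation in distributions on R^2\<close>
    "(\<forall>\<psi>. test2 \<psi> \<longrightarrow>
        ((\<lambda>(R, u). chi_sharp R (u - s) * Lstar \<psi> R u) has_integral 0) (UNIV :: (real \<times> real) set))
   \<and> (\<forall>\<psi>. test2 \<psi> \<longrightarrow>
        ((\<lambda>R. flat_pair s R (\<lambda>u. Lstar \<psi> R u)) has_integral 0) (UNIV :: real set))
   \<and> (\<forall>\<phi>. test1 \<phi> \<longrightarrow>
        ((\<lambda>R. sharp_pair s R \<phi>) \<longlongrightarrow> 0) (at 0)
      \<and> ((\<lambda>R. deriv (\<lambda>r. sharp_pair s r \<phi>) R) \<longlongrightarrow> \<phi> s) (at 0)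
      \<and> ((\<lambda>R. flat_pair s R \<phi>) \<longlongrightarrow> \<phi> s) (at 0)
      \<and> ((\<lambda>R. deriv (\<lambda>r. flat_pair s r \<phi>) R) \<longlongrightarrow> 0) (at 0)
      \<and> ((\<lambda>R. sharp_pair s R \<phi>) \<longlongrightarrow> 0) at_bot
      \<and> ((\<lambda>R. flat_pair s R \<phi>) \<longlongrightarrow> 0) at_bot
      \<and> (\<forall>R. ((\<lambda>r. sharp_pair s r \<phi>) has_real_derivative
                  (flat_pair s R \<phi> + sharp_pair s R \<phi>)) (at R)))"
  using item1_2D item2_final items_test1 sharp_bot flat_bot by blast

end
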